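(* Let $n$ be a positive integer and $d\in\Delta(n)$, written as $d=(1,2,\dots,q,q^{(s_q)},(q-1)^{(s_{q-1})},\dots,1^{(s_1)})$ with $q\ge1$, $s_1,\dots,s_q\ge0$; let $L=q+\sum_{i=1}^q s_i$ be the index of the last nonzero entry $d_L$, and set $b_i=d_i-d_{i+1}$ for $q\le i<L$ and $b_L=d_L$. Then: (1) If $s_i\ge2$ for all $1\le i<q$, then $|\,[\,d\,]_q\,|=1$. (2) If $s_i\ge2$ for all $1\le i<q$ and $s_q\ge1$, then $|\,[\,d\,]\,|=\prod_{i=q}^{L}(b_i+1)$. (3) For every natural number $m$ there exist a positive integer $n'$ and a partition $\alpha\in\mathcal{P}(n')$ such that, with $d'=\delta(\alpha)$, $|\,[\,d'\,]\,|=m$. (4) If $d=(1,2,\dots,q,k^{(s_k)},(k-1)^{(s_{k-1})},\dots,2^{(s_2)},1^{(s_1)})$ with $k<q$ and $s_k\ge2$ (i.e. $s_q=\dots=s_{k+1}=0$), and $d'=(1,2,\dots,k,k^{(s_k)},(k-1)^{(s_{k-1})},\dots,2^{(s_2)},1^{(s_1)})$, then $|\,[\,d\,]\,|=|\,[\,d'\,]\,|$. (5) If $\sigma_i=\min\{s_i,2\}$ for $1\le i\le q$ and $d'=(1,2,\dots,q,q^{(\sigma_q)},(q-1)^{(\sigma_{q-1})},\dots,2^{(\sigma_2)},1^{(\sigma_1)})$, then $|\,[\,d\,]\,|=|\,[\,d'\,]\,|$.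
   Context: A partition of a positive integer $n$ is a finite non-increasing sequence $\alpha=(\alpha_1,\dots,\alpha_l)$ of positive integers with sum $n$; $\mathcal{P}(n)$ is the set of partitions of $n$, $\alpha_i=0$ for $i>l$, and $\mathcal{P}(n,k)$ is the set of partitions of $n$ with exactly $k$ nonzero parts. The diagonal sequence is $\delta(\alpha)=(d_k)_{k\ge1}$ with $d_k=|\{i:1\le i\le k,\ \alpha_i+i-1\ge k\}|$, trailing zeros omitted; $\Delta(n)=\{\delta(\alpha):\alpha\in\mathcal{P}(n)\}$. For a sequence $d$ that is the diagonal sequence of some partition of some $N$, $[\,d\,]=\{\alpha\in\mathcal{P}(N):\delta(\alpha)=d\}$ and $[\,d\,]_k=[\,d\,]\cap\mathcal{P}(N,k)$. Every diagonal sequence has the form $(1,2,\dots,q,q^{(s_q)},\dots,1^{(s_1)})$ for some $q\ge1$, $s_i\ge0$, where $j^{(s)}$ denotes $s$ consecutive entries equal to $j$; conversely every such sequence is a diagonal sequence. *)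

theory Defs
  imports Main
begin

definition is_partition :: "nat list \<Rightarrow> nat \<Rightarrow> bool" where
  "is_partition \<alpha> n \<longleftrightarrow> sorted_wrt (\<ge>) \<alpha> \<and> (\<forall>x\<in>set \<alpha>. 0 < x) \<and> sum_list \<alpha> = n"

definition partitions :: "nat \<Rightarrow> nat list set" where
  "partitions n = {\<alpha>. is_partition \<alpha> n}"

definition part :: "nat list \<Rightarrow> nat \<Rightarrow> nat" where
  "part \<alpha> i = (if 1 \<le> i \<and> i \<le> length \<alpha> then \<alpha> ! (i - 1) else 0)"

definition diag_entry :: "nat list \<Rightarrow> nat \<Rightarrow> nat" where
  "diag_entry \<alpha> k = card {i. 1 \<le> i \<and> i \<le> k \<and> part \<alpha> i + i - 1 \<ge> k}"

text \<open>Diagonal sequence (d_1, d_2, ...) with trailing zeros omitted. Since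
  alpha_i + i - 1 <= n for a partition of n, d_k = 0 for k > n = sum alpha.\<close>
definition delta :: "nat list \<Rightarrow> nat list" where
  "delta \<alpha> = rev (dropWhile (\<lambda>x. x = 0)
      (rev (map (diag_entry \<alpha>) [1..<sum_list \<alpha> + 1])))"

definition Delta :: "nat \<Rightarrow> nat list set" where
  "Delta n = delta ` partitions n"

definition dclass :: "nat list \<Rightarrow> nat list set" where
  "dclass d = {\<alpha>. is_partition \<alpha> (sum_list \<alpha>) \<and> delta \<alpha> = d}"

definition dclass_k :: "nat list \<Rightarrow> nat \<Rightarrow> nat list set" where
  "dclass_k d k = {\<alpha> \<in> dclass d. length \<alpha> = k}"

definition diagseq :: "nat \<Rightarrow> (nat \<Rightarrow> nat) \<Rightarrow> nat list" where
  "diagseq q s = [1..<q+1] @ concat (map (\<lambda>j. replicate (s j) j) (rev [1..<q+1]))"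

definition ent :: "nat list \<Rightarrow> nat \<Rightarrow> nat" where
  "ent d i = (if 1 \<le> i \<and> i \<le> length d then d ! (i - 1) else 0)"

end

theory Submission
  imports Defs
begin

definition strip :: "nat list \<Rightarrow> nat list" where
  "strip xs = rev (dropWhile (\<lambda>x. x = 0) (rev xs))"

lemma strip_decomp: "\<exists>m. xs = strip xs @ replicate m 0"
proof -
  have "rev xs = takeWhile (\<lambda>x. x = 0) (rev xs) @ dropWhile (\<lambda>x. x = 0) (rev xs)"
    by simp
  moreover have "takeWhile (\<lambda>x. x = 0) (rev xs) = replicate (length (takeWhile (\<lambda>x. x = 0) (rev xs))) 0"
    by (metis (mono_tags, lifting) replicate_length_same set_takeWhileD)
  ultimately have "rev xs = replicate (length (takeWhile (\<lambda>x. x = 0) (rev xs))) 0 @ dropWhile (\<lambda>x. x = 0) (rev xs)"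
    by metis
  hence "xs = strip xs @ replicate (length (takeWhile (\<lambda>x. x = 0) (rev xs))) 0"
    unfolding strip_def by (metis rev_append rev_replicate rev_rev_ident)
  thus ?thesis by blast
qed

lemma ent_append_zeros: "ent (ys @ replicate m 0) k = ent ys k"
  unfolding ent_def by (auto simp: nth_append)

lemma ent_strip: "ent (strip xs) k = ent xs k"
proof -
  obtain m where "xs = strip xs @ replicate m 0" using strip_decomp by blast
  hence "ent xs k = ent (strip xs @ replicate m 0) k" by simp
  thus ?thesis by (simp add: ent_append_zeros)
qed

lemma strip_last: "strip xs = [] \<or> last (strip xs) \<noteq> 0"
proof (cases "dropWhile (\<lambda>x. x = 0) (rev xs) = []")
  case True thus ?thesis unfolding strip_def by simp
next
  case False
  hence "hd (dropWhile (\<lambda>x. x = 0) (rev xs)) \<noteq> 0" by (rule hd_dropWhile)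
  moreover have "last (rev (dropWhile (\<lambda>x. x = 0) (rev xs))) = hd (dropWhile (\<lambda>x. x = 0) (rev xs))"
    by (rule last_rev)
  ultimately show ?thesis unfolding strip_def by simp
qed

lemma ent_last: "xs \<noteq> [] \<Longrightarrow> ent xs (length xs) = last xs"
  unfolding ent_def by (cases xs) (auto simp: last_conv_nth)

lemma ent_beyond: "length xs < k \<Longrightarrow> ent xs k = 0"
  unfolding ent_def by simp

lemma ent_unique:
  assumes "u = [] \<or> last u \<noteq> 0" "v = [] \<or> last v \<noteq> 0" "\<forall>k\<ge>1. ent u k = ent v k"
  shows "u = v"
proof -
  have len: "length u = length v"
  proof (rule ccontr)
    assume "length u \<noteq> length v"
    hence "length u < length v \<or> length v < length u" by arith
    thus False
    proof
      assume h: "length u < length v"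
      hence "v \<noteq> []" by auto
      hence "ent v (length v) \<noteq> 0" using assms(2) ent_last by metis
      moreover have "ent u (length v) = 0" using h ent_beyond by metis
      moreover have "length v \<ge> 1" using \<open>v \<noteq> []\<close> by (cases v) auto
      ultimately show False using assms(3) by metis
    next
      assume h: "length v < length u"
      hence "u \<noteq> []" by auto
      hence "ent u (length u) \<noteq> 0" using assms(1) ent_last by metis
      moreover have "ent v (length u) = 0" using h ent_beyond by metis
      moreover have "length u \<ge> 1" using \<open>u \<noteq> []\<close> by (cases u) auto
      ultimately show False using assms(3) by metis
    qed
  qed
  show ?thesis
  proof (rule nth_equalityI)
    show "length u = length v" by (rule len)
    fix i assume "i < length u"
    hence "ent u (Suc i) = u ! i" "ent v (Suc i) = v ! i" using len by (auto simp: ent_def)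
    moreover have "Suc i \<ge> 1" by simp
    ultimately show "u ! i = v ! i" using assms(3) by metis
  qed
qed

lemma partition_bound:
  assumes "\<forall>x\<in>set xs. 0 < x" "j < length xs"
  shows "xs ! j + j \<le> sum_list xs"
  using assms
proof (induction xs arbitrary: j)
  case Nil thus ?case by simp
next
  case (Cons x xs)
  show ?case
  proof (cases j)
    case 0 thus ?thesis by simp
  next
    case (Suc j')
    hence "xs ! j' + j' \<le> sum_list xs" using Cons by auto
    moreover have "0 < x" using Cons by auto
    ultimately show ?thesis using Suc by simp
  qed
qed

lemma diag_entry_zero:
  assumes "is_partition \<alpha> N" "N < k"
  shows "diag_entry \<alpha> k = 0"
proof -
  have "{i. 1 \<le> i \<and> i \<le> k \<and> part \<alpha> i + i - 1 \<ge> k} = {}"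
  proof (rule ccontr)
    assume "{i. 1 \<le> i \<and> i \<le> k \<and> part \<alpha> i + i - 1 \<ge> k} \<noteq> {}"
    then obtain i where i: "1 \<le> i" "i \<le> k" "part \<alpha> i + i - 1 \<ge> k" by auto
    show False
    proof (cases "i \<le> length \<alpha>")
      case True
      hence "\<alpha> ! (i - 1) + (i - 1) \<le> N"
        using partition_bound[of \<alpha> "i - 1"] assms(1) i(1) unfolding is_partition_def by auto
      thus False using i True assms(2) unfolding part_def by auto
    next
      case False
      thus False using i unfolding part_def by auto
    qed
  qed
  thus ?thesis unfolding diag_entry_def by simp
qed

lemma delta_iff:
  assumes "is_partition \<alpha> (sum_list \<alpha>)" "d = [] \<or> last d \<noteq> 0"
  shows "delta \<alpha> = d \<longleftrightarrow> (\<forall>k\<ge>1. diag_entry \<alpha> k = ent d k)"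
proof -
  let ?N = "sum_list \<alpha>"
  let ?m = "map (diag_entry \<alpha>) [1..<?N + 1]"
  have de: "delta \<alpha> = strip ?m" unfolding delta_def strip_def by simp
  have em: "ent ?m k = diag_entry \<alpha> k" if "k \<ge> 1" for k
  proof (cases "k \<le> ?N")
    case True thus ?thesis using that unfolding ent_def by (auto simp del: upt_Suc)
  next
    case False thus ?thesis using diag_entry_zero[OF assms(1)] unfolding ent_def by auto
  qed
  show ?thesis
  proof
    assume "delta \<alpha> = d"
    thus "\<forall>k\<ge>1. diag_entry \<alpha> k = ent d k" using de em ent_strip by metis
  next
    assume h: "\<forall>k\<ge>1. diag_entry \<alpha> k = ent d k"
    have "strip ?m = d"
      by (rule ent_unique[OF strip_last assms(2)]) (use h em ent_strip in metis)
    thus "delta \<alpha> = d" using de by simp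
  qed
qed


definition supp :: "nat \<Rightarrow> nat set \<Rightarrow> nat set" where
  "supp k S = {i. 1 \<le> i \<and> i \<le> Suc k \<and> (i \<le> k \<longrightarrow> i \<in> S) \<and> (2 \<le> i \<longrightarrow> i - 1 \<in> S)}"

lemma supp_sub: "supp k S \<subseteq> {1..Suc k}"
  unfolding supp_def by auto

lemma finite_supp: "finite (supp k S)"
  using supp_sub finite_subset by blast

definition choices :: "(nat \<Rightarrow> bool) \<Rightarrow> nat \<Rightarrow> nat set \<Rightarrow> nat \<Rightarrow> nat set set" where
  "choices P k S x = {T. T \<subseteq> supp k S \<and> T \<subseteq> Collect P \<and> card T = x}"

lemma finite_choices: "finite (choices P k S x)"
proof -
  have "choices P k S x \<subseteq> Pow (supp k S)" unfolding choices_def by auto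
  thus ?thesis using finite_supp finite_subset by blast
qed

primrec F :: "(nat \<Rightarrow> bool) \<Rightarrow> nat \<Rightarrow> nat set \<Rightarrow> nat list \<Rightarrow> nat" where
  "F P k S [] = 1"
| "F P k S (x # ds) = (\<Sum>T\<in>choices P k S x. F P (Suc k) T ds)"

primrec valid :: "(nat \<Rightarrow> bool) \<Rightarrow> nat \<Rightarrow> nat set \<Rightarrow> nat list \<Rightarrow> nat set list \<Rightarrow> bool" where
  "valid P k S [] Ts = (Ts = [])"
| "valid P k S (x # ds) Ts = (case Ts of [] \<Rightarrow> False
      | T # Ts' \<Rightarrow> T \<in> choices P k S x \<and> valid P (Suc k) T ds Ts')"

lemma card_valid: "finite {Ts. valid P k S ds Ts} \<and> card {Ts. valid P k S ds Ts} = F P k S ds"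
proof (induction ds arbitrary: k S)
  case Nil
  thus ?case by simp
next
  case (Cons x ds)
  have eq: "{Ts. valid P k S (x # ds) Ts} = (\<Union>T\<in>choices P k S x. (\<lambda>Ts. T # Ts) ` {Ts. valid P (Suc k) T ds Ts})"
  proof (intro set_eqI iffI)
    fix Ts assume "Ts \<in> {Ts. valid P k S (x # ds) Ts}"
    then obtain T Ts' where "Ts = T # Ts'" "T \<in> choices P k S x" "valid P (Suc k) T ds Ts'"
      by (auto split: list.splits)
    thus "Ts \<in> (\<Union>T\<in>choices P k S x. (\<lambda>Ts. T # Ts) ` {Ts. valid P (Suc k) T ds Ts})" by blast
  qed auto
  have fin: "\<forall>T\<in>choices P k S x. finite ((\<lambda>Ts. T # Ts) ` {Ts. valid P (Suc k) T ds Ts})"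
    using Cons.IH by blast
  have disj: "\<forall>T1\<in>choices P k S x. \<forall>T2\<in>choices P k S x. T1 \<noteq> T2 \<longrightarrow>
      ((\<lambda>Ts. T1 # Ts) ` {Ts. valid P (Suc k) T1 ds Ts}) \<inter> ((\<lambda>Ts. T2 # Ts) ` {Ts. valid P (Suc k) T2 ds Ts}) = {}"
    by auto
  have "card {Ts. valid P k S (x # ds) Ts} = (\<Sum>T\<in>choices P k S x. card ((\<lambda>Ts. T # Ts) ` {Ts. valid P (Suc k) T ds Ts}))"
    unfolding eq by (rule card_UN_disjoint[OF finite_choices fin disj])
  also have "\<dots> = (\<Sum>T\<in>choices P k S x. F P (Suc k) T ds)"
  proof (rule sum.cong)
    fix T assume "T \<in> choices P k S x"
    have "card ((\<lambda>Ts. T # Ts) ` {Ts. valid P (Suc k) T ds Ts}) = card {Ts. valid P (Suc k) T ds Ts}"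
      by (rule card_image) (auto simp: inj_on_def)
    thus "card ((\<lambda>Ts. T # Ts) ` {Ts. valid P (Suc k) T ds Ts}) = F P (Suc k) T ds" using Cons.IH by simp
  qed simp
  finally show ?case using eq fin finite_choices by simp
qed

lemma valid_iff:
  "valid P k S ds Ts \<longleftrightarrow> length Ts = length ds \<and>
     (\<forall>j<length ds. Ts ! j \<in> choices P (k + j) ((S # Ts) ! j) (ds ! j))"
proof (induction ds arbitrary: k S Ts)
  case Nil thus ?case by simp
next
  case (Cons x ds)
  show ?case
  proof (cases Ts)
    case Nil thus ?thesis by simp
  next
    case (Cons T Ts')
    have "valid P k S (x # ds) Ts \<longleftrightarrow> T \<in> choices P k S x \<and> valid P (Suc k) T ds Ts'"
      using Cons by simp
    also have "\<dots> \<longleftrightarrow> T \<in> choices P k S x \<and> length Ts' = length ds \<and>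
     (\<forall>j<length ds. Ts' ! j \<in> choices P (Suc k + j) ((T # Ts') ! j) (ds ! j))"
      using Cons.IH by simp
    also have "\<dots> \<longleftrightarrow> length Ts = length (x # ds) \<and>
     (\<forall>j<length (x # ds). Ts ! j \<in> choices P (k + j) ((S # Ts) ! j) ((x # ds) ! j))"
      (is "?A \<longleftrightarrow> ?B")
    proof
      assume ?A thus ?B using Cons by (auto simp: less_Suc_eq_0_disj)
    next
      assume h: ?B
      have "T \<in> choices P k S x" using h[THEN conjunct2, rule_format, of 0] Cons by simp
      moreover have "\<forall>j<length ds. Ts' ! j \<in> choices P (Suc k + j) ((T # Ts') ! j) (ds ! j)"
      proof (intro allI impI)
        fix j assume "j < length ds"
        thus "Ts' ! j \<in> choices P (Suc k + j) ((T # Ts') ! j) (ds ! j)"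
          using h[THEN conjunct2, rule_format, of "Suc j"] Cons by simp
      qed
      ultimately show ?A using h Cons by simp
    qed
    finally show ?thesis .
  qed
qed

definition Sa :: "nat list \<Rightarrow> nat \<Rightarrow> nat set" where
  "Sa \<alpha> k = {i. 1 \<le> i \<and> i \<le> k \<and> k \<le> part \<alpha> i + i - 1}"

lemma finite_Sa: "finite (Sa \<alpha> k)"
proof -
  have "Sa \<alpha> k \<subseteq> {1..k}" unfolding Sa_def by auto
  thus ?thesis using finite_subset by blast
qed

lemma diag_entry_Sa: "diag_entry \<alpha> k = card (Sa \<alpha> k)"
  unfolding diag_entry_def Sa_def by simp

lemma Sa_0: "Sa \<alpha> 0 = {}"
  unfolding Sa_def by auto

lemma part_mono:
  assumes "sorted_wrt (\<ge>) \<alpha>" "1 \<le> j" "j \<le> i"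
  shows "part \<alpha> i \<le> part \<alpha> j"
proof (cases "i \<le> length \<alpha>")
  case False thus ?thesis unfolding part_def by auto
next
  case True
  show ?thesis
  proof (cases "j = i")
    case True thus ?thesis by simp
  next
    case False
    hence "j - 1 < i - 1" using assms by auto
    hence "\<alpha> ! (i - 1) \<le> \<alpha> ! (j - 1)"
      using assms(1) True assms(2,3) unfolding sorted_wrt_iff_nth_less by auto
    thus ?thesis unfolding part_def using True assms by auto
  qed
qed

lemma Sa_supp:
  assumes "sorted_wrt (\<ge>) \<alpha>"
  shows "Sa \<alpha> (Suc k) \<subseteq> supp k (Sa \<alpha> k)"
proof
  fix i assume "i \<in> Sa \<alpha> (Suc k)"
  hence i: "1 \<le> i" "i \<le> Suc k" "Suc k \<le> part \<alpha> i + i - 1" unfolding Sa_def by auto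
  have a: "i \<le> k \<longrightarrow> i \<in> Sa \<alpha> k" using i unfolding Sa_def by auto
  have b: "2 \<le> i \<longrightarrow> i - 1 \<in> Sa \<alpha> k"
  proof
    assume "2 \<le> i"
    hence "part \<alpha> i \<le> part \<alpha> (i - 1)" using part_mono[OF assms, of "i - 1" i] by auto
    thus "i - 1 \<in> Sa \<alpha> k" using i \<open>2 \<le> i\<close> unfolding Sa_def by auto
  qed
  show "i \<in> supp k (Sa \<alpha> k)" using a b i unfolding supp_def by auto
qed

lemma part_eq_ent: "part \<alpha> i = ent \<alpha> i"
  unfolding part_def ent_def by simp

definition Phi :: "nat \<Rightarrow> nat list \<Rightarrow> nat set list" where
  "Phi L \<alpha> = map (Sa \<alpha>) [1..<L + 1]"

definition Acls :: "(nat \<Rightarrow> bool) \<Rightarrow> nat list \<Rightarrow> nat list set" where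
  "Acls P d = {\<alpha>. is_partition \<alpha> (sum_list \<alpha>) \<and> delta \<alpha> = d \<and> (\<forall>i. 0 < part \<alpha> i \<longrightarrow> P i)}"

lemma Phi_valid:
  assumes "d = [] \<or> last d \<noteq> 0" "\<alpha> \<in> Acls P d"
  shows "valid P 0 {} d (Phi (length d) \<alpha>)"
proof -
  have part: "is_partition \<alpha> (sum_list \<alpha>)" and dl: "delta \<alpha> = d" and rows: "\<forall>i. 0 < part \<alpha> i \<longrightarrow> P i"
    using assms(2) unfolding Acls_def by auto
  have srt: "sorted_wrt (\<ge>) \<alpha>" using part unfolding is_partition_def by auto
  have de: "\<forall>k\<ge>1. diag_entry \<alpha> k = ent d k" using delta_iff[OF part assms(1)] dl by simp
  show ?thesis unfolding valid_iff
  proof (intro conjI allI impI)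
    show "length (Phi (length d) \<alpha>) = length d" unfolding Phi_def by (simp del: upt_Suc)
    fix j assume j: "j < length d"
    have e1: "Phi (length d) \<alpha> ! j = Sa \<alpha> (Suc j)" unfolding Phi_def using j by (simp del: upt_Suc)
    have e2: "({} # Phi (length d) \<alpha>) ! j = Sa \<alpha> j"
    proof (cases j)
      case 0 thus ?thesis using Sa_0 by simp
    next
      case (Suc j') thus ?thesis unfolding Phi_def using j by (simp del: upt_Suc)
    qed
    have c: "card (Sa \<alpha> (Suc j)) = d ! j"
      using de[rule_format, of "Suc j"] diag_entry_Sa j unfolding ent_def by simp
    have p: "Sa \<alpha> (Suc j) \<subseteq> Collect P"
    proof
      fix i assume "i \<in> Sa \<alpha> (Suc j)"
      hence "0 < part \<alpha> i" unfolding Sa_def by auto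
      thus "i \<in> Collect P" using rows by auto
    qed
    show "Phi (length d) \<alpha> ! j \<in> choices P (0 + j) (({} # Phi (length d) \<alpha>) ! j) (d ! j)"
      unfolding e1 e2 choices_def using Sa_supp[OF srt, of j] c p by simp
  qed
qed


lemma Sa_eq_part_le:
  assumes "\<forall>k. Sa \<alpha> k = Sa \<beta> k" "1 \<le> i"
  shows "part \<alpha> i \<le> part \<beta> i"
proof (cases "part \<alpha> i = 0")
  case True thus ?thesis by simp
next
  case False
  have "i \<in> Sa \<alpha> (part \<alpha> i + i - 1)" using False assms(2) unfolding Sa_def by auto
  hence "i \<in> Sa \<beta> (part \<alpha> i + i - 1)" using assms(1) by simp
  thus ?thesis unfolding Sa_def using assms(2) by auto
qed

lemma pos_last: "\<forall>x\<in>set (\<alpha>::nat list). 0 < x \<Longrightarrow> \<alpha> = [] \<or> last \<alpha> \<noteq> 0"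
proof (cases "\<alpha> = []")
  case False
  assume h: "\<forall>x\<in>set \<alpha>. 0 < x"
  have "last \<alpha> \<in> set \<alpha>" using False by (rule last_in_set)
  thus ?thesis using h by auto
qed simp

lemma Phi_inj:
  assumes "d = [] \<or> last d \<noteq> 0"
  shows "inj_on (Phi (length d)) (Acls P d)"
proof (rule inj_onI)
  fix \<alpha> \<beta> assume a: "\<alpha> \<in> Acls P d" and b: "\<beta> \<in> Acls P d" and eq: "Phi (length d) \<alpha> = Phi (length d) \<beta>"
  have pa: "is_partition \<alpha> (sum_list \<alpha>)" "delta \<alpha> = d" using a unfolding Acls_def by auto
  have pb: "is_partition \<beta> (sum_list \<beta>)" "delta \<beta> = d" using b unfolding Acls_def by auto
  have da: "\<forall>k\<ge>1. card (Sa \<alpha> k) = ent d k" using delta_iff[OF pa(1) assms] pa(2) diag_entry_Sa by simp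
  have db: "\<forall>k\<ge>1. card (Sa \<beta> k) = ent d k" using delta_iff[OF pb(1) assms] pb(2) diag_entry_Sa by simp
  have S: "Sa \<alpha> k = Sa \<beta> k" for k
  proof (cases "1 \<le> k \<and> k \<le> length d")
    case True
    have "Phi (length d) \<alpha> ! (k - 1) = Sa \<alpha> k" "Phi (length d) \<beta> ! (k - 1) = Sa \<beta> k"
      unfolding Phi_def using True by (auto simp del: upt_Suc)
    thus ?thesis using eq by simp
  next
    case False
    show ?thesis
    proof (cases "k = 0")
      case True thus ?thesis using Sa_0 by simp
    next
      case False
      hence "length d < k" "1 \<le> k" using \<open>\<not> (1 \<le> k \<and> k \<le> length d)\<close> by auto
      hence "card (Sa \<alpha> k) = 0" "card (Sa \<beta> k) = 0" using da db ent_beyond by auto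
      thus ?thesis using finite_Sa by simp
    qed
  qed
  have S': "\<forall>k. Sa \<alpha> k = Sa \<beta> k" "\<forall>k. Sa \<beta> k = Sa \<alpha> k" using S by auto
  have "\<forall>i\<ge>1. part \<alpha> i = part \<beta> i"
  proof (intro allI impI)
    fix i :: nat assume "1 \<le> i"
    thus "part \<alpha> i = part \<beta> i" using Sa_eq_part_le[OF S'(1)] Sa_eq_part_le[OF S'(2)] le_antisym by blast
  qed
  hence "\<forall>i\<ge>1. ent \<alpha> i = ent \<beta> i" using part_eq_ent by simp
  moreover have "\<alpha> = [] \<or> last \<alpha> \<noteq> 0" "\<beta> = [] \<or> last \<beta> \<noteq> 0"
    using pa(1) pb(1) pos_last unfolding is_partition_def by auto
  ultimately show "\<alpha> = \<beta>" using ent_unique by blast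
qed


lemma Phi_surj:
  assumes dl: "d = [] \<or> last d \<noteq> 0" and v: "valid P 0 {} d Ts"
  shows "\<exists>\<alpha>\<in>Acls P d. Phi (length d) \<alpha> = Ts"
proof -
  define L where "L = length d"
  have lenT: "length Ts = L" and ch: "\<forall>j<L. Ts ! j \<in> choices P j (({} # Ts) ! j) (d ! j)"
    using v unfolding valid_iff L_def by auto
  define T where "T k = (if 1 \<le> k \<and> k \<le> L then Ts ! (k - 1) else {})" for k
  have T0: "T 0 = {}" unfolding T_def by simp
  have prev: "({} # Ts) ! j = T j" if "j < L" for j
  proof (cases j)
    case 0 thus ?thesis using T0 by simp
  next
    case (Suc j') thus ?thesis using that unfolding T_def by simp
  qed
  have t1: "T (Suc k) \<subseteq> supp k (T k) \<and> T (Suc k) \<subseteq> Collect P \<and> card (T (Suc k)) = ent d (Suc k)" for k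
  proof (cases "k < L")
    case True
    hence "Ts ! k \<in> choices P k (({} # Ts) ! k) (d ! k)" using ch by simp
    hence "Ts ! k \<in> choices P k (T k) (d ! k)" using prev[OF True] by simp
    moreover have "T (Suc k) = Ts ! k" using True unfolding T_def by simp
    moreover have "ent d (Suc k) = d ! k" using True unfolding ent_def L_def by simp
    ultimately show ?thesis unfolding choices_def by simp
  next
    case False
    hence "T (Suc k) = {}" unfolding T_def by simp
    moreover have "ent d (Suc k) = 0" using False unfolding ent_def L_def by simp
    ultimately show ?thesis by simp
  qed
  have t3: "T k \<subseteq> {1..k}" for k
  proof (cases k)
    case 0 thus ?thesis using T0 by simp
  next
    case (Suc k') thus ?thesis using t1[of k'] supp_sub[of k' "T k'"] by blast
  qed
  have t4: "i \<in> T k" if "i \<in> T (Suc k)" "i \<le> k" for i k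
    using that t1[of k] unfolding supp_def by blast
  have t5: "i \<in> T k" if "1 \<le> i" "Suc i \<in> T (Suc k)" for i k
  proof -
    have "Suc i \<in> supp k (T k)" using that t1[of k] by blast
    thus ?thesis using that unfolding supp_def by auto
  qed
  have tz: "T k = {}" if "L < k" for k using that unfolding T_def by simp
  define K where "K i = {k. i \<in> T k}" for i
  have finK: "K i \<subseteq> {1..L}" for i
  proof
    fix k assume "k \<in> K i"
    hence "i \<in> T k" unfolding K_def by simp
    hence "k \<noteq> 0" "\<not> L < k" using T0 tz by (cases k; auto)+
    thus "k \<in> {1..L}" by auto
  qed
  have finK': "finite (K i)" for i using finK finite_subset by blast
  define r where "r i = card (K i)" for i
  have c1: "i \<in> T k \<longleftrightarrow> i \<le> k \<and> k \<le> r i + i - 1" if "1 \<le> i" for i k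
  proof (cases "K i = {}")
    case True
    hence "r i = 0" unfolding r_def by simp
    moreover have "i \<notin> T k" using True unfolding K_def by auto
    ultimately show ?thesis using that by auto
  next
    case False
    define M where "M = Max (K i)"
    have MK: "M \<in> K i" unfolding M_def using False finK' Max_in by blast
    hence "i \<in> T M" unfolding K_def by simp
    hence iM: "i \<le> M" using t3[of M] by auto
    have down: "\<forall>j. j \<le> M - i \<longrightarrow> i \<in> T (M - j)"
    proof
      fix j show "j \<le> M - i \<longrightarrow> i \<in> T (M - j)"
      proof (induction j)
        case 0 thus ?case using MK unfolding K_def by simp
      next
        case (Suc j)
        show ?case
        proof
          assume h: "Suc j \<le> M - i"
          hence "i \<in> T (M - j)" using Suc by simp
          moreover have "M - j = Suc (M - Suc j)" using h by simp
          ultimately have "i \<in> T (Suc (M - Suc j))" by simp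
          moreover have "i \<le> M - Suc j" using h by simp
          ultimately show "i \<in> T (M - Suc j)" using t4 by blast
        qed
      qed
    qed
    have KM: "K i = {i..M}"
    proof
      show "K i \<subseteq> {i..M}"
      proof
        fix k assume "k \<in> K i"
        hence "i \<in> T k" unfolding K_def by simp
        hence "i \<le> k" using t3[of k] by auto
        moreover have "k \<le> M" unfolding M_def using finK' \<open>k \<in> K i\<close> by simp
        ultimately show "k \<in> {i..M}" by simp
      qed
      show "{i..M} \<subseteq> K i"
      proof
        fix k assume "k \<in> {i..M}"
        hence "M - k \<le> M - i" "M - (M - k) = k" by auto
        hence "i \<in> T (M - (M - k))" using down by blast
        thus "k \<in> K i" using \<open>M - (M - k) = k\<close> unfolding K_def by simp
      qed
    qed
    hence "r i = Suc M - i" unfolding r_def by simp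
    hence "r i + i - 1 = M" using iM by simp
    thus ?thesis using KM unfolding K_def by auto
  qed
  have c2: "r (Suc i) \<le> r i" if "1 \<le> i" for i
  proof -
    have "K (Suc i) \<subseteq> Suc ` K i"
    proof
      fix k assume "k \<in> K (Suc i)"
      hence h: "Suc i \<in> T k" unfolding K_def by simp
      hence "k \<noteq> 0" using T0 by (cases k) auto
      then obtain k' where k': "k = Suc k'" using not0_implies_Suc by blast
      have "Suc i \<in> T (Suc k')" using h k' by simp
      hence "i \<in> T k'" by (rule t5[OF that])
      thus "k \<in> Suc ` K i" using k' unfolding K_def by auto
    qed
    hence "card (K (Suc i)) \<le> card (Suc ` K i)" by (rule card_mono[OF finite_imageI[OF finK']])
    also have "\<dots> = card (K i)" by (rule card_image) simp
    finally show ?thesis unfolding r_def .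
  qed
  have c2': "r (i + n) \<le> r i" if "1 \<le> i" for i n
  proof (induction n)
    case 0 thus ?case by simp
  next
    case (Suc n)
    have "1 \<le> i + n" using that by simp
    hence "r (Suc (i + n)) \<le> r (i + n)" by (rule c2)
    thus ?case using Suc by simp
  qed
  have c2'': "r j \<le> r i" if "1 \<le> i" "i \<le> j" for i j
    using c2'[OF that(1), of "j - i"] that by simp
  have c3: "r i = 0" if "L < i" for i
  proof -
    have "K i = {}"
    proof (rule ccontr)
      assume "K i \<noteq> {}"
      then obtain k where "i \<in> T k" unfolding K_def by auto
      hence "i \<le> k" using t3[of k] by auto
      thus False using tz \<open>i \<in> T k\<close> that by auto
    qed
    thus ?thesis unfolding r_def by simp
  qed
  define m where "m = map r [1..<L + 1]"
  define \<alpha> where "\<alpha> = takeWhile (\<lambda>x. 0 < x) m"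
  have lm: "length m = L" unfolding m_def by simp
  have la: "length \<alpha> \<le> L" unfolding \<alpha>_def using length_takeWhile_le[of "\<lambda>x. 0 < x" m] lm by simp
  have anth: "\<alpha> ! j = r (Suc j)" if "j < length \<alpha>" for j
  proof -
    have "\<alpha> ! j = m ! j" unfolding \<alpha>_def using that takeWhile_nth unfolding \<alpha>_def by blast
    also have "\<dots> = r (Suc j)" unfolding m_def using that la by (simp del: upt_Suc)
    finally show ?thesis .
  qed
  have c4: "part \<alpha> i = r i" if "1 \<le> i" for i
  proof (cases "i \<le> length \<alpha>")
    case True
    thus ?thesis unfolding part_def using that anth[of "i - 1"] by simp
  next
    case False
    hence p0: "part \<alpha> i = 0" unfolding part_def by simp
    show ?thesis
    proof (cases "length \<alpha> < L")
      case True
      hence "length (takeWhile (\<lambda>x. 0 < x) m) < length m" unfolding \<alpha>_def using lm by simp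
      hence "\<not> 0 < m ! length (takeWhile (\<lambda>x. 0 < x) m)" by (rule nth_length_takeWhile)
      hence "\<not> 0 < m ! length \<alpha>" unfolding \<alpha>_def .
      hence "r (Suc (length \<alpha>)) = 0" unfolding m_def using True by (simp del: upt_Suc)
      moreover have "r i \<le> r (Suc (length \<alpha>))" using c2''[of "Suc (length \<alpha>)" i] False by simp
      ultimately show ?thesis using p0 by simp
    next
      case False
      hence "L < i" using \<open>\<not> i \<le> length \<alpha>\<close> la by simp
      thus ?thesis using c3 p0 by simp
    qed
  qed
  have srt: "sorted_wrt (\<ge>) \<alpha>"
    unfolding sorted_wrt_iff_nth_less
  proof (intro allI impI)
    fix a b assume "a < b" "b < length \<alpha>"
    thus "\<alpha> ! b \<le> \<alpha> ! a" using anth c2''[of "Suc a" "Suc b"] by simp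
  qed
  have pos: "\<forall>x\<in>set \<alpha>. 0 < x" unfolding \<alpha>_def
  proof
    fix x assume "x \<in> set (takeWhile (\<lambda>x. 0 < x) m)"
    thus "0 < x" by (rule set_takeWhileD[THEN conjunct2])
  qed
  have ispart: "is_partition \<alpha> (sum_list \<alpha>)" unfolding is_partition_def using srt pos by simp
  have SaT: "Sa \<alpha> k = T k" for k
  proof
    show "Sa \<alpha> k \<subseteq> T k"
    proof
      fix i assume "i \<in> Sa \<alpha> k"
      hence "1 \<le> i" "i \<le> k" "k \<le> part \<alpha> i + i - 1" unfolding Sa_def by auto
      thus "i \<in> T k" using c1 c4 by simp
    qed
    show "T k \<subseteq> Sa \<alpha> k"
    proof
      fix i assume h: "i \<in> T k"
      hence "1 \<le> i" using t3[of k] by auto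
      thus "i \<in> Sa \<alpha> k" using c1 c4 h unfolding Sa_def by simp
    qed
  qed
  have "\<forall>k\<ge>1. diag_entry \<alpha> k = ent d k"
  proof (intro allI impI)
    fix k :: nat assume "1 \<le> k"
    then obtain k' where "k = Suc k'" using not0_implies_Suc by fastforce
    thus "diag_entry \<alpha> k = ent d k" using diag_entry_Sa SaT t1 by simp
  qed
  hence dd: "delta \<alpha> = d" using delta_iff[OF ispart dl] by simp
  have rows: "\<forall>i. 0 < part \<alpha> i \<longrightarrow> P i"
  proof (intro allI impI)
    fix i assume h: "0 < part \<alpha> i"
    hence i1: "1 \<le> i" unfolding part_def by (cases "1 \<le> i") auto
    hence "0 < r i" using c4 h by simp
    hence "K i \<noteq> {}" unfolding r_def by auto
    then obtain k where "i \<in> T k" unfolding K_def by auto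
    moreover have "k \<noteq> 0" using \<open>i \<in> T k\<close> T0 by (cases k) auto
    then obtain k' where "k = Suc k'" using not0_implies_Suc by blast
    ultimately show "P i" using t1[of k'] by auto
  qed
  have "\<alpha> \<in> Acls P d" unfolding Acls_def using ispart dd rows by simp
  moreover have "Phi (length d) \<alpha> = Ts"
  proof (rule nth_equalityI)
    show "length (Phi (length d) \<alpha>) = length Ts" unfolding Phi_def using lenT L_def by (simp del: upt_Suc)
    fix j assume "j < length (Phi (length d) \<alpha>)"
    hence j: "j < L" unfolding Phi_def L_def by (simp del: upt_Suc)
    hence "Phi (length d) \<alpha> ! j = Sa \<alpha> (Suc j)" unfolding Phi_def L_def by (simp del: upt_Suc)
    also have "\<dots> = T (Suc j)" by (rule SaT)
    also have "\<dots> = Ts ! j" unfolding T_def using j by simp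
    finally show "Phi (length d) \<alpha> ! j = Ts ! j" .
  qed
  ultimately show ?thesis by blast
qed

theorem count_thm:
  assumes "d = [] \<or> last d \<noteq> 0"
  shows "card (Acls P d) = F P 0 {} d"
proof -
  have "bij_betw (Phi (length d)) (Acls P d) {Ts. valid P 0 {} d Ts}"
    unfolding bij_betw_def
  proof
    show "inj_on (Phi (length d)) (Acls P d)" by (rule Phi_inj[OF assms])
    show "Phi (length d) ` Acls P d = {Ts. valid P 0 {} d Ts}"
      using Phi_valid[OF assms] Phi_surj[OF assms] by blast
  qed
  hence "card (Acls P d) = card {Ts. valid P 0 {} d Ts}" by (rule bij_betw_same_card)
  thus ?thesis using card_valid by simp
qed


abbreviation "F0 \<equiv> F (\<lambda>_. True)"

lemma choices_True: "choices (\<lambda>_. True) k S x = {T. T \<subseteq> supp k S \<and> card T = x}"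
  unfolding choices_def by auto

lemma supp_full: "supp k {1..k} = {1..Suc k}"
  unfolding supp_def by auto

lemma choices_exact:
  assumes "card A = x" "finite A"
  shows "{T. T \<subseteq> A \<and> card T = x} = {A}"
proof
  show "{T. T \<subseteq> A \<and> card T = x} \<subseteq> {A}"
  proof
    fix T assume "T \<in> {T. T \<subseteq> A \<and> card T = x}"
    hence "T \<subseteq> A" "card T = card A" using assms by auto
    hence "T = A" using card_subset_eq assms(2) by blast
    thus "T \<in> {A}" by simp
  qed
qed (use assms in auto)

lemma choices_empty:
  assumes "card A < x" "finite A"
  shows "{T. T \<subseteq> A \<and> card T = x} = {}"
proof (intro equalityI subsetI)
  fix T assume "T \<in> {T. T \<subseteq> A \<and> card T = x}"
  hence T: "T \<subseteq> A" "card T = x" by auto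
  have "card T \<le> card A" by (rule card_mono[OF assms(2) T(1)])
  thus "T \<in> {}" using assms(1) T(2) by simp
qed simp

lemma stair_step:
  assumes "\<forall>i. 1 \<le> i \<and> i \<le> Suc k \<longrightarrow> P i"
  shows "F P k {1..k} (Suc k # ds) = F P (Suc k) {1..Suc k} ds"
proof -
  have "choices P k {1..k} (Suc k) = {{1..Suc k}}"
  proof -
    have "choices P k {1..k} (Suc k) = {T. T \<subseteq> {1..Suc k} \<and> card T = Suc k}"
      unfolding choices_def supp_full using assms by auto
    also have "\<dots> = {{1..Suc k}}" by (rule choices_exact) auto
    finally show ?thesis .
  qed
  thus ?thesis by simp
qed

lemma stair:
  assumes "\<forall>i. 1 \<le> i \<and> i \<le> q \<longrightarrow> P i"
  shows "F P 0 {} ([1..<q + 1] @ ds) = F P q {1..q} ds"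
  using assms
proof (induction q arbitrary: ds)
  case 0 thus ?case by simp
next
  case (Suc q)
  have "F P 0 {} ([1..<Suc q + 1] @ ds) = F P 0 {} ([1..<q + 1] @ (Suc q # ds))" by simp
  also have "\<dots> = F P q {1..q} (Suc q # ds)" using Suc by simp
  also have "\<dots> = F P (Suc q) {1..Suc q} ds" by (rule stair_step) (use Suc.prems in auto)
  finally show ?case .
qed

definition sh :: "nat \<Rightarrow> nat \<Rightarrow> nat" where
  "sh m i = (if i < m then i else Suc i)"

lemma inj_sh: "inj (sh m)"
  unfolding inj_def sh_def by auto

lemma supp_sh:
  assumes "m \<notin> S" "1 \<le> m" "m \<le> k" "S \<subseteq> {1..k}"
  shows "supp (Suc k) (sh m ` S) = sh (Suc m) ` supp k S"
proof (intro set_eqI iffI)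
  fix i assume "i \<in> supp (Suc k) (sh m ` S)"
  hence h: "1 \<le> i" "i \<le> Suc (Suc k)" "i \<le> Suc k \<longrightarrow> i \<in> sh m ` S" "2 \<le> i \<longrightarrow> i - 1 \<in> sh m ` S"
    unfolding supp_def by auto
  show "i \<in> sh (Suc m) ` supp k S"
  proof (cases "i < m")
    case True
    hence "i \<in> S" using h(3) assms unfolding sh_def by (auto split: if_splits)
    moreover have "2 \<le> i \<longrightarrow> i - 1 \<in> S" using h(4) True unfolding sh_def by (auto split: if_splits)
    ultimately have "i \<in> supp k S" using h(1) True assms(3) unfolding supp_def by auto
    moreover have "sh (Suc m) i = i" using True unfolding sh_def by simp
    ultimately show ?thesis by force
  next
    case False
    have "i \<noteq> m"
    proof
      assume "i = m"
      hence "i \<in> sh m ` S" using h(3) assms by simp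
      then obtain j where "j \<in> S" "i = sh m j" by auto
      thus False using \<open>i = m\<close> assms(1) unfolding sh_def by (auto split: if_splits)
    qed
    have "i \<noteq> Suc m"
    proof
      assume "i = Suc m"
      hence "m \<in> sh m ` S" using h(4) assms by simp
      then obtain j where "j \<in> S" "m = sh m j" by auto
      thus False using assms(1) unfolding sh_def by (auto split: if_splits)
    qed
    have "i \<noteq> Suc (Suc m)"
    proof
      assume "i = Suc (Suc m)"
      hence "Suc m \<in> sh m ` S" using h(4) by simp
      then obtain j where "j \<in> S" "Suc m = sh m j" by auto
      thus False using assms(1) unfolding sh_def by (auto split: if_splits)
    qed
    hence gt: "Suc (Suc m) < i" using False \<open>i \<noteq> m\<close> \<open>i \<noteq> Suc m\<close> by simp
    have a: "i - 1 \<le> k \<longrightarrow> i - 1 \<in> S"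
    proof
      assume "i - 1 \<le> k"
      hence "i \<in> sh m ` S" using h(3) gt by simp
      then obtain j where "j \<in> S" "i = sh m j" by auto
      thus "i - 1 \<in> S" using gt unfolding sh_def by (auto split: if_splits)
    qed
    have b: "i - 2 \<in> S"
    proof -
      have "i - 1 \<in> sh m ` S" using h(4) gt by simp
      then obtain j where j: "j \<in> S" "i - 1 = sh m j" by auto
      have "\<not> j < m"
      proof
        assume "j < m" hence "sh m j = j" unfolding sh_def by simp
        thus False using j(2) gt \<open>j < m\<close> by simp
      qed
      hence "i - 1 = Suc j" using j(2) unfolding sh_def by simp
      hence "i - 2 = j" by simp
      thus "i - 2 \<in> S" using j(1) by simp
    qed
    have "i - 1 - 1 = i - 2" by simp
    hence b': "i - 1 - 1 \<in> S" using b by simp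
    have "i - 1 \<le> Suc k" using h(2) by simp
    hence "i - 1 \<in> supp k S" using a b' gt unfolding supp_def by simp
    moreover have "sh (Suc m) (i - 1) = i" using gt unfolding sh_def by simp
    ultimately show ?thesis by force
  qed
next
  fix i assume "i \<in> sh (Suc m) ` supp k S"
  then obtain j where j: "j \<in> supp k S" "i = sh (Suc m) j" by auto
  hence h: "1 \<le> j" "j \<le> Suc k" "j \<le> k \<longrightarrow> j \<in> S" "2 \<le> j \<longrightarrow> j - 1 \<in> S"
    unfolding supp_def by auto
  have jm: "j \<noteq> m" using h(3) assms by auto
  have jm1: "j \<noteq> Suc m" using h(4) assms by auto
  show "i \<in> supp (Suc k) (sh m ` S)"
  proof (cases "j < m")
    case True
    hence "i = j" using j unfolding sh_def by simp
    moreover have "j \<in> sh m ` S" using h(3) True assms(3) unfolding sh_def by force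
    moreover have "2 \<le> j \<longrightarrow> j - 1 \<in> sh m ` S"
    proof
      assume "2 \<le> j"
      hence "j - 1 \<in> S" "sh m (j - 1) = j - 1" using h(4) True unfolding sh_def by auto
      thus "j - 1 \<in> sh m ` S" by force
    qed
    ultimately show ?thesis using h(1,2) unfolding supp_def by auto
  next
    case False
    hence gt: "Suc m < j" using jm jm1 by simp
    hence ij: "i = Suc j" using j unfolding sh_def by simp
    have "j \<le> k \<longrightarrow> Suc j \<in> sh m ` S"
    proof
      assume "j \<le> k"
      hence "j \<in> S" "sh m j = Suc j" using h(3) gt unfolding sh_def by auto
      thus "Suc j \<in> sh m ` S" by force
    qed
    moreover have "j \<in> sh m ` S"
    proof -
      have "j - 1 \<in> S" "sh m (j - 1) = j" using h(4) gt unfolding sh_def by auto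
      thus ?thesis by force
    qed
    ultimately show ?thesis using ij h(2) unfolding supp_def by auto
  qed
qed

lemma supp_notin:
  assumes "m \<notin> S" "1 \<le> m"
  shows "Suc m \<notin> supp k S"
  using assms unfolding supp_def by auto

lemma choices_sh:
  assumes "m \<notin> S" "1 \<le> m" "m \<le> k" "S \<subseteq> {1..k}"
  shows "{T. T \<subseteq> supp (Suc k) (sh m ` S) \<and> card T = x} = image (sh (Suc m)) ` {T. T \<subseteq> supp k S \<and> card T = x}"
proof (intro set_eqI iffI)
  fix T' assume "T' \<in> {T. T \<subseteq> supp (Suc k) (sh m ` S) \<and> card T = x}"
  hence h: "T' \<subseteq> sh (Suc m) ` supp k S" "card T' = x" using supp_sh[OF assms] by auto
  obtain T where T: "T \<subseteq> supp k S" "T' = sh (Suc m) ` T" using subset_imageE[OF h(1)] by blast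
  have "card T = x" using h(2) T(2) card_image[OF inj_on_subset[OF inj_sh]] by auto
  thus "T' \<in> image (sh (Suc m)) ` {T. T \<subseteq> supp k S \<and> card T = x}" using T by blast
next
  fix T' assume "T' \<in> image (sh (Suc m)) ` {T. T \<subseteq> supp k S \<and> card T = x}"
  then obtain T where T: "T \<subseteq> supp k S" "card T = x" "T' = sh (Suc m) ` T" by auto
  have "card T' = x" using T card_image[OF inj_on_subset[OF inj_sh]] by auto
  moreover have "T' \<subseteq> supp (Suc k) (sh m ` S)" using supp_sh[OF assms] T by auto
  ultimately show "T' \<in> {T. T \<subseteq> supp (Suc k) (sh m ` S) \<and> card T = x}" by simp
qed

lemma gap_shift:
  assumes "m \<notin> S" "1 \<le> m" "m \<le> k" "S \<subseteq> {1..k}"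
  shows "F0 k S ds = F0 (Suc k) (sh m ` S) ds"
  using assms
proof (induction ds arbitrary: k S m)
  case Nil thus ?case by simp
next
  case (Cons x ds)
  have "F0 k S (x # ds) = (\<Sum>T\<in>{T. T \<subseteq> supp k S \<and> card T = x}. F0 (Suc k) T ds)"
    by (simp add: choices_True)
  also have "\<dots> = (\<Sum>T\<in>{T. T \<subseteq> supp k S \<and> card T = x}. F0 (Suc (Suc k)) (sh (Suc m) ` T) ds)"
  proof (rule sum.cong)
    fix T assume "T \<in> {T. T \<subseteq> supp k S \<and> card T = x}"
    hence T: "T \<subseteq> supp k S" by simp
    have "Suc m \<notin> T" using supp_notin[OF Cons.prems(1,2)] T by auto
    moreover have "T \<subseteq> {1..Suc k}" using T supp_sub by blast
    ultimately show "F0 (Suc k) T ds = F0 (Suc (Suc k)) (sh (Suc m) ` T) ds"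
      using Cons.IH[of "Suc m" T "Suc k"] Cons.prems by simp
  qed simp
  also have "\<dots> = (\<Sum>T'\<in>image (sh (Suc m)) ` {T. T \<subseteq> supp k S \<and> card T = x}. F0 (Suc (Suc k)) T' ds)"
  proof (rule sum.reindex[symmetric, unfolded comp_def])
    show "inj_on (image (sh (Suc m))) {T. T \<subseteq> supp k S \<and> card T = x}"
      by (rule inj_onI) (use inj_image_eq_iff[OF inj_sh] in blast)
  qed
  also have "\<dots> = (\<Sum>T'\<in>{T. T \<subseteq> supp (Suc k) (sh m ` S) \<and> card T = x}. F0 (Suc (Suc k)) T' ds)"
    using choices_sh[OF Cons.prems] by simp
  also have "\<dots> = F0 (Suc k) (sh m ` S) (x # ds)" by (simp add: choices_True)
  finally show ?case .
qed


lemma F0_Cons: "F0 k S (x # ds) = (\<Sum>T\<in>{T. T \<subseteq> supp k S \<and> card T = x}. F0 (Suc k) T ds)"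
  by (simp add: choices_True)

lemma F_Nil: "F P k S [] = 1" by simp

declare F.simps[simp del]

definition unsh :: "nat \<Rightarrow> nat \<Rightarrow> nat" where
  "unsh m i = (if i < m then i else i - 1)"

lemma m_notin_supp: "m \<notin> S \<Longrightarrow> m \<le> k \<Longrightarrow> m \<notin> supp k S"
  unfolding supp_def by auto

lemma unsh_inj:
  assumes "m \<notin> A"
  shows "inj_on (unsh m) A"
proof (rule inj_onI)
  fix i j assume "i \<in> A" "j \<in> A" "unsh m i = unsh m j"
  moreover have "i \<noteq> m" "j \<noteq> m" using assms \<open>i \<in> A\<close> \<open>j \<in> A\<close> by auto
  ultimately show "i = j" unfolding unsh_def by (auto split: if_splits)
qed

lemma unsh_img:
  assumes "S \<subseteq> {1..k}" "1 \<le> m" "m \<le> k" "m \<notin> S"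
  shows "unsh m ` supp k S \<subseteq> S"
proof
  fix y assume "y \<in> unsh m ` supp k S"
  then obtain i where i: "i \<in> supp k S" "y = unsh m i" by auto
  have "i \<noteq> m" using m_notin_supp[OF assms(4,3)] i(1) by auto
  show "y \<in> S"
  proof (cases "i < m")
    case True
    thus ?thesis using i assms(3) unfolding supp_def unsh_def by auto
  next
    case False
    hence "2 \<le> i" using \<open>i \<noteq> m\<close> assms(2) by simp
    thus ?thesis using i False unfolding supp_def unsh_def by auto
  qed
qed

lemma supp_card_le:
  assumes "S \<subseteq> {1..k}" "1 \<le> m" "m \<le> k" "m \<notin> S"
  shows "card (supp k S) \<le> card S"
proof -
  have "card (supp k S) = card (unsh m ` supp k S)"
    using card_image[OF unsh_inj[OF m_notin_supp[OF assms(4,3)]]] by simp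
  also have "\<dots> \<le> card S"
    by (rule card_mono[OF finite_subset[OF assms(1)] unsh_img[OF assms]]) simp
  finally show ?thesis .
qed

lemma supp_card_eq:
  assumes "S \<subseteq> {1..k}" "1 \<le> m" "m \<le> k" "m \<notin> S" "card (supp k S) = card S"
  shows "supp k S = sh m ` S"
proof -
  have fS: "finite S" using finite_subset[OF assms(1)] by simp
  have c: "card (unsh m ` supp k S) = card S"
    using card_image[OF unsh_inj[OF m_notin_supp[OF assms(4,3)]]] assms(5) by simp
  have img: "unsh m ` supp k S = S"
    using card_subset_eq[OF fS unsh_img[OF assms(1-4)] c] .
  have id: "sh m (unsh m i) = i" if "i \<in> supp k S" for i
  proof -
    have "i \<noteq> m" using m_notin_supp[OF assms(4,3)] that by auto
    thus ?thesis unfolding sh_def unsh_def by auto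
  qed
  have "sh m ` S = sh m ` unsh m ` supp k S" using img by simp
  also have "\<dots> = (\<lambda>i. sh m (unsh m i)) ` supp k S" by (simp add: image_image)
  also have "\<dots> = supp k S" using id by simp
  finally show ?thesis by simp
qed

lemma supp_card_less:
  assumes "S \<subseteq> {1..k}" "1 \<le> m" "m \<notin> S" "j \<in> S" "m < j" "Suc j \<notin> S" "Suc j \<le> k"
  shows "card (supp k S) < card S"
proof -
  have mk: "m \<le> k" using assms by simp
  have fS: "finite S" using finite_subset[OF assms(1)] by simp
  have sub: "unsh m ` supp k S \<subseteq> S - {j}"
  proof
    fix y assume y: "y \<in> unsh m ` supp k S"
    hence "y \<in> S" using unsh_img[OF assms(1,2) mk assms(3)] by auto
    moreover have "y \<noteq> j"
    proof
      assume "y = j"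
      then obtain i where i: "i \<in> supp k S" "j = unsh m i" using y by auto
      have "i \<noteq> m" using m_notin_supp[OF assms(3) mk] i(1) by auto
      have "\<not> i < m" using i(2) assms(5) unfolding unsh_def by auto
      hence "i = Suc j" using i(2) \<open>i \<noteq> m\<close> unfolding unsh_def by auto
      thus False using i(1) assms(6,7) unfolding supp_def by auto
    qed
    ultimately show "y \<in> S - {j}" by simp
  qed
  have "card (supp k S) = card (unsh m ` supp k S)"
    using card_image[OF unsh_inj[OF m_notin_supp[OF assms(3) mk]]] by simp
  also have "\<dots> \<le> card (S - {j})" by (rule card_mono[OF _ sub]) (use fS in simp)
  also have "\<dots> < card S" by (rule card_Diff1_less[OF fS assms(4)])
  finally show ?thesis .
qed

lemma F0_exact:
  assumes "card (supp k S) = x"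
  shows "F0 k S (x # ds) = F0 (Suc k) (supp k S) ds"
  unfolding F0_Cons choices_exact[OF assms finite_supp] by simp

lemma F0_zero:
  assumes "card (supp k S) < x"
  shows "F0 k S (x # ds) = 0"
  unfolding F0_Cons choices_empty[OF assms finite_supp] by simp

lemma exists_missing:
  assumes "S \<subseteq> {1..k}" "card S < k"
  obtains m where "1 \<le> m" "m \<le> k" "m \<notin> S"
proof -
  have "\<not> {1..k} \<subseteq> S"
  proof
    assume "{1..k} \<subseteq> S"
    moreover have "finite S" using finite_subset[OF assms(1)] by simp
    ultimately have "card {1..k} \<le> card S" using card_mono by blast
    thus False using assms(2) by simp
  qed
  then obtain m where "m \<in> {1..k}" "m \<notin> S" by blast
  moreover have "1 \<le> m" "m \<le> k" using \<open>m \<in> {1..k}\<close> by auto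
  ultimately show ?thesis using that by blast
qed

lemma F0_stay:
  assumes "S \<subseteq> {1..k}" "card S = x" "x < k" "card (supp k S) = x"
  shows "F0 k S (x # ds) = F0 k S ds"
proof -
  have lt: "card S < k" using assms by simp
  obtain m where m: "1 \<le> m" "m \<le> k" "m \<notin> S" by (rule exists_missing[OF assms(1) lt])
  have "supp k S = sh m ` S" using supp_card_eq[OF assms(1) m] assms by simp
  hence "F0 k S (x # ds) = F0 (Suc k) (sh m ` S) ds" using F0_exact[OF assms(4)] by simp
  also have "\<dots> = F0 k S ds" using gap_shift[OF m(3,1,2) assms(1)] by simp
  finally show ?thesis .
qed

lemma cosing_good:
  assumes "T \<subseteq> {1..Suc k}" "card T = k"
  shows "card (supp (Suc k) T) = k"
proof -
  have lt: "card T < Suc k" using assms by simp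
  obtain m where m: "1 \<le> m" "m \<le> Suc k" "m \<notin> T" by (rule exists_missing[OF assms(1) lt])
  have fT: "finite T" using finite_subset[OF assms(1)] by simp
  have Teq: "T = {1..Suc k} - {m}"
  proof (rule card_subset_eq)
    show "finite ({1..Suc k} - {m})" by simp
    show "T \<subseteq> {1..Suc k} - {m}" using assms(1) m(3) by auto
    show "card T = card ({1..Suc k} - {m})" using assms(2) m by simp
  qed
  have "sh m ` T \<subseteq> supp (Suc k) T"
  proof
    fix y assume "y \<in> sh m ` T"
    then obtain i where i: "i \<in> T" "y = sh m i" by auto
    have ir: "1 \<le> i" "i \<le> Suc k" "i \<noteq> m" using i(1) Teq by auto
    show "y \<in> supp (Suc k) T"
    proof (cases "i < m")
      case True
      hence "y = i" using i(2) unfolding sh_def by simp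
      moreover have "2 \<le> i \<longrightarrow> i - 1 \<in> T" using True ir Teq by auto
      ultimately show ?thesis using ir i(1) unfolding supp_def by auto
    next
      case False
      hence "y = Suc i" using i(2) unfolding sh_def by simp
      moreover have "Suc i \<le> Suc k \<longrightarrow> Suc i \<in> T" using False ir Teq by auto
      ultimately show ?thesis using ir i(1) unfolding supp_def by auto
    qed
  qed
  hence "card (sh m ` T) \<le> card (supp (Suc k) T)" using card_mono[OF finite_supp] by blast
  hence "k \<le> card (supp (Suc k) T)" using card_image[OF inj_on_subset[OF inj_sh]] assms(2) by simp
  moreover have "card (supp (Suc k) T) \<le> k" using supp_card_le[OF assms(1) m] assms(2) by simp
  ultimately show ?thesis by simp
qed

lemma F0_dup:
  assumes "S \<subseteq> {1..k}" "card S = x"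
  shows "F0 k S (x # x # ds) = F0 k S (x # ds)"
proof (cases "x < k")
  case False
  hence xk: "x = k" using assms card_mono[OF _ assms(1)] by fastforce
  hence Sf: "S = {1..k}" using card_subset_eq[of "{1..k}" S] assms by simp
  have "F0 k S (x # x # ds) = (\<Sum>T\<in>{T. T \<subseteq> supp k S \<and> card T = x}. F0 (Suc k) T (x # ds))"
    by (rule F0_Cons)
  also have "\<dots> = (\<Sum>T\<in>{T. T \<subseteq> {1..Suc k} \<and> card T = k}. F0 (Suc k) T (x # ds))"
    using Sf xk supp_full by simp
  also have "\<dots> = (\<Sum>T\<in>{T. T \<subseteq> {1..Suc k} \<and> card T = k}. F0 (Suc k) T ds)"
  proof (rule sum.cong)
    fix T assume "T \<in> {T. T \<subseteq> {1..Suc k} \<and> card T = k}"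
    hence T: "T \<subseteq> {1..Suc k}" "card T = k" by auto
    show "F0 (Suc k) T (x # ds) = F0 (Suc k) T ds"
      using F0_stay[OF T(1) T(2)[folded xk]] cosing_good[OF T] xk by simp
  qed simp
  also have "\<dots> = (\<Sum>T\<in>{T. T \<subseteq> supp k S \<and> card T = x}. F0 (Suc k) T ds)"
    using Sf xk supp_full by simp
  also have "\<dots> = F0 k S (x # ds)" by (rule F0_Cons[symmetric])
  finally show ?thesis .
next
  case True
  have lt: "card S < k" using assms True by simp
  obtain m where m: "1 \<le> m" "m \<le> k" "m \<notin> S" by (rule exists_missing[OF assms(1) lt])
  have le: "card (supp k S) \<le> x" using supp_card_le[OF assms(1) m] assms by simp
  show ?thesis
  proof (cases "card (supp k S) < x")
    case True
    thus ?thesis using F0_zero by simp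
  next
    case False
    hence eq: "card (supp k S) = x" using le by simp
    have sp: "supp k S = sh m ` S" using supp_card_eq[OF assms(1) m] eq assms by simp
    have "card (supp (Suc k) (supp k S)) = x"
    proof -
      have "supp (Suc k) (supp k S) = sh (Suc m) ` supp k S" using sp supp_sh[OF m(3,1,2) assms(1)] by simp
      thus ?thesis using card_image[OF inj_on_subset[OF inj_sh]] eq by simp
    qed
    hence "F0 (Suc k) (supp k S) (x # ds) = F0 (Suc k) (supp k S) ds"
      using F0_stay[OF supp_sub eq] True by simp
    thus ?thesis using F0_exact[OF eq] by simp
  qed
qed

lemma F0_trip: "F0 k S (x # x # x # ds) = F0 k S (x # x # ds)"
proof -
  have "F0 k S (x # x # x # ds) = (\<Sum>T\<in>{T. T \<subseteq> supp k S \<and> card T = x}. F0 (Suc k) T (x # x # ds))"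
    by (rule F0_Cons)
  also have "\<dots> = (\<Sum>T\<in>{T. T \<subseteq> supp k S \<and> card T = x}. F0 (Suc k) T (x # ds))"
  proof (rule sum.cong)
    fix T assume "T \<in> {T. T \<subseteq> supp k S \<and> card T = x}"
    hence "T \<subseteq> {1..Suc k}" "card T = x" using supp_sub by blast+
    thus "F0 (Suc k) T (x # x # ds) = F0 (Suc k) T (x # ds)" by (rule F0_dup)
  qed simp
  also have "\<dots> = F0 k S (x # x # ds)" by (rule F0_Cons[symmetric])
  finally show ?thesis .
qed

lemma F0_trip_pre: "F0 k S (pre @ x # x # x # ds) = F0 k S (pre @ x # x # ds)"
proof (induction pre arbitrary: k S)
  case Nil thus ?case using F0_trip by simp
next
  case (Cons y pre)
  thus ?case by (simp add: F0_Cons)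
qed

lemma F0_rep: "F0 k S (pre @ replicate n x @ ds) = F0 k S (pre @ replicate (min n 2) x @ ds)"
proof (induction n)
  case 0 thus ?case by simp
next
  case (Suc n)
  show ?case
  proof (cases "n < 2")
    case True
    hence "min (Suc n) 2 = Suc n" by simp
    thus ?thesis by simp
  next
    case False
    then obtain n' where n': "n = Suc (Suc n')" by (metis add_2_eq_Suc le_Suc_ex not_less)
    have "F0 k S (pre @ replicate (Suc n) x @ ds) = F0 k S (pre @ x # x # x # (replicate n' x @ ds))"
      using n' by simp
    also have "\<dots> = F0 k S (pre @ x # x # (replicate n' x @ ds))" by (rule F0_trip_pre)
    also have "\<dots> = F0 k S (pre @ replicate n x @ ds)" using n' by simp
    also have "\<dots> = F0 k S (pre @ replicate (min n 2) x @ ds)" by (rule Suc.IH)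
    also have "\<dots> = F0 k S (pre @ replicate (min (Suc n) 2) x @ ds)" using False by (simp add: numeral_2_eq_2)
    finally show ?thesis .
  qed
qed

lemma F0_concat:
  "F0 k S (pre @ concat (map (\<lambda>j. replicate (s j) j) js)) =
   F0 k S (pre @ concat (map (\<lambda>j. replicate (min (s j) 2) j) js))"
proof (induction js arbitrary: pre)
  case Nil thus ?case by simp
next
  case (Cons j js)
  have "F0 k S (pre @ concat (map (\<lambda>j. replicate (s j) j) (j # js))) =
        F0 k S (pre @ replicate (s j) j @ concat (map (\<lambda>j. replicate (s j) j) js))" by simp
  also have "\<dots> = F0 k S (pre @ replicate (min (s j) 2) j @ concat (map (\<lambda>j. replicate (s j) j) js))"
    by (rule F0_rep)
  also have "\<dots> = F0 k S ((pre @ replicate (min (s j) 2) j) @ concat (map (\<lambda>j. replicate (s j) j) js))" by simp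
  also have "\<dots> = F0 k S ((pre @ replicate (min (s j) 2) j) @ concat (map (\<lambda>j. replicate (min (s j) 2) j) js))"
    by (rule Cons.IH)
  also have "\<dots> = F0 k S (pre @ concat (map (\<lambda>j. replicate (min (s j) 2) j) (j # js)))" by simp
  finally show ?case .
qed


definition Bs :: "nat \<Rightarrow> nat \<Rightarrow> nat \<Rightarrow> nat set" where
  "Bs n c a = {1..a} \<union> {n + a + 1 - c..n}"

lemma Bs_sub: "a \<le> c \<Longrightarrow> c < n \<Longrightarrow> Bs n c a \<subseteq> {1..n}"
  unfolding Bs_def by auto

lemma Bs_card: assumes "a \<le> c" "c < n" shows "card (Bs n c a) = c"
proof -
  have "card (Bs n c a) = card {1..a} + card {n + a + 1 - c..n}"
    unfolding Bs_def by (rule card_Un_disjoint) (use assms in auto)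
  thus ?thesis using assms by simp
qed

lemma Bs_notin: "a \<le> c \<Longrightarrow> c < n \<Longrightarrow> Suc a \<notin> Bs n c a"
  unfolding Bs_def by auto

lemma Bs_supp: assumes "a \<le> c" "c < n" shows "supp n (Bs n c a) = Bs (Suc n) c a"
  using assms unfolding supp_def Bs_def by (auto; arith)

lemma Bs_sh: assumes "a \<le> c" "c < n" shows "sh (Suc a) ` Bs n c a = Bs (Suc n) c a"
proof (intro set_eqI iffI)
  fix y assume "y \<in> sh (Suc a) ` Bs n c a"
  then obtain i where "i \<in> Bs n c a" "y = sh (Suc a) i" by auto
  thus "y \<in> Bs (Suc n) c a" using assms unfolding Bs_def sh_def by auto
next
  fix y assume y: "y \<in> Bs (Suc n) c a"
  show "y \<in> sh (Suc a) ` Bs n c a"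
  proof (cases "y \<le> a")
    case True
    hence "y = sh (Suc a) y" "y \<in> Bs n c a" using y unfolding Bs_def sh_def by auto
    thus ?thesis by blast
  next
    case False
    hence "y = sh (Suc a) (y - 1)" "y - 1 \<in> Bs n c a" using y assms unfolding Bs_def sh_def by auto
    thus ?thesis by blast
  qed
qed

lemma Bs_inj: assumes "c < n" shows "inj_on (Bs n c) {..c}"
proof (rule inj_onI)
  fix a a' assume a: "a \<in> {..c}" "a' \<in> {..c}" "Bs n c a = Bs n c a'"
  show "a = a'"
  proof (rule ccontr)
    assume "a \<noteq> a'"
    hence "a < a' \<or> a' < a" by arith
    thus False
    proof
      assume "a < a'"
      hence "Suc a \<in> Bs n c a'" unfolding Bs_def by auto
      thus False using Bs_notin[of a c n] a assms by auto
    next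
      assume "a' < a"
      hence "Suc a' \<in> Bs n c a" unfolding Bs_def by auto
      thus False using Bs_notin[of a' c n] a assms by auto
    qed
  qed
qed

lemma good_Bs:
  assumes T: "T \<subseteq> {1..n}" and cT: "card T = c" and cn: "c < n" and g: "card (supp n T) = c"
  shows "\<exists>a\<le>c. T = Bs n c a"
proof -
  have fT: "finite T" using finite_subset[OF T] by simp
  have "card T < n" using cT cn by simp
  then obtain m0 where "1 \<le> m0" "m0 \<le> n" "m0 \<notin> T" by (rule exists_missing[OF T])
  define M where "M = {1..n} - T"
  have Mne: "M \<noteq> {}" "finite M" using \<open>1 \<le> m0\<close> \<open>m0 \<le> n\<close> \<open>m0 \<notin> T\<close> unfolding M_def by auto
  define m where "m = Min M"
  have mM: "m \<in> M" unfolding m_def using Mne Min_in by blast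
  hence m: "1 \<le> m" "m \<le> n" "m \<notin> T" unfolding M_def by auto
  have below: "j \<in> T" if "1 \<le> j" "j < m" for j
  proof (rule ccontr)
    assume "j \<notin> T"
    hence "j \<in> M" using that m unfolding M_def by auto
    hence "m \<le> j" unfolding m_def using Mne by simp
    thus False using that by simp
  qed
  have nogap: "Suc j \<in> T" if "j \<in> T" "m < j" "Suc j \<le> n" for j
  proof (rule ccontr)
    assume "Suc j \<notin> T"
    hence "card (supp n T) < card T" using supp_card_less[OF T m(1) m(3) that(1,2) _ that(3)] by simp
    thus False using g cT by simp
  qed
  define a where "a = m - 1"
  have left: "{1..a} \<subseteq> T" using below unfolding a_def by auto
  define U where "U = T - {1..a}"
  have U: "U \<subseteq> {Suc m..n}"
  proof
    fix x assume "x \<in> U"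
    hence "x \<in> T" "\<not> x \<le> a" using T unfolding U_def by auto
    moreover have "x \<noteq> m" using m(3) \<open>x \<in> T\<close> by auto
    ultimately show "x \<in> {Suc m..n}" using T m unfolding a_def by auto
  qed
  show ?thesis
  proof (cases "U = {}")
    case True
    hence Teq: "T = {1..a}" using left unfolding U_def by auto
    hence "a = c" using cT by simp
    moreover have "Bs n c c = {1..c}" unfolding Bs_def using cn by auto
    ultimately show ?thesis using Teq by auto
  next
    case False
    have fU: "finite U" using fT unfolding U_def by simp
    define p where "p = Min U"
    have pU: "p \<in> U" unfolding p_def using False fU Min_in by blast
    hence pT: "p \<in> T" and pm: "m < p" and pn: "p \<le> n" using U unfolding U_def by auto
    have up: "\<forall>t. p + t \<le> n \<longrightarrow> p + t \<in> T"
    proof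
      fix t show "p + t \<le> n \<longrightarrow> p + t \<in> T"
      proof (induction t)
        case 0 thus ?case using pT by simp
      next
        case (Suc t)
        show ?case
        proof
          assume "p + Suc t \<le> n"
          hence "p + t \<in> T" using Suc by simp
          moreover have "m < p + t" using pm by simp
          ultimately have "Suc (p + t) \<in> T" using nogap \<open>p + Suc t \<le> n\<close> by simp
          thus "p + Suc t \<in> T" by simp
        qed
      qed
    qed
    have Teq: "T = {1..a} \<union> {p..n}"
    proof
      show "T \<subseteq> {1..a} \<union> {p..n}"
      proof
        fix x assume x: "x \<in> T"
        show "x \<in> {1..a} \<union> {p..n}"
        proof (cases "x \<in> {1..a}")
          case False
          hence "x \<in> U" using x unfolding U_def by simp
          hence "p \<le> x" "x \<le> n" unfolding p_def using fU U by auto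
          thus ?thesis by simp
        qed simp
      qed
      show "{1..a} \<union> {p..n} \<subseteq> T"
      proof
        fix x assume "x \<in> {1..a} \<union> {p..n}"
        thus "x \<in> T"
        proof
          assume "x \<in> {1..a}" thus ?thesis using left by auto
        next
          assume "x \<in> {p..n}"
          hence "p + (x - p) \<le> n" "p + (x - p) = x" by auto
          thus ?thesis using up by metis
        qed
      qed
    qed
    have am: "a < m" using m(1) unfolding a_def by simp
    have "card T = card {1..a} + card {p..n}"
      unfolding Teq by (rule card_Un_disjoint) (use am pm in auto)
    hence "c = a + (Suc n - p)" using cT by simp
    hence "a \<le> c" "p = n + a + 1 - c" using pn by auto
    thus ?thesis using Teq unfolding Bs_def by auto
  qed
qed


lemma Bs_good: "a \<le> c \<Longrightarrow> c < n \<Longrightarrow> card (supp n (Bs n c a)) = c"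
  using Bs_supp Bs_card by simp

lemma sum_full:
  assumes "c \<le> k"
  shows "F0 k {1..k} (c # c # Y) = (\<Sum>a\<le>c. F0 (Suc k) (Bs (Suc k) c a) Y)"
proof -
  let ?Ch = "{T. T \<subseteq> {1..Suc k} \<and> card T = c}"
  let ?G = "Bs (Suc k) c ` {..c}"
  have ck: "c < Suc k" using assms by simp
  have "F0 k {1..k} (c # c # Y) = (\<Sum>T\<in>?Ch. F0 (Suc k) T (c # Y))"
    by (rule trans[OF F0_Cons]) (simp only: supp_full)
  also have "\<dots> = (\<Sum>T\<in>?G. F0 (Suc k) T Y)"
  proof (rule sum.mono_neutral_cong_right)
    show "finite ?Ch" by (rule finite_subset[of _ "Pow {1..Suc k}"]) auto
    show "?G \<subseteq> ?Ch" using Bs_sub Bs_card ck by auto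
    show "\<forall>T\<in>?Ch - ?G. F0 (Suc k) T (c # Y) = 0"
    proof
      fix T assume T: "T \<in> ?Ch - ?G"
      hence Ts: "T \<subseteq> {1..Suc k}" "card T = c" by auto
      obtain m where m: "1 \<le> m" "m \<le> Suc k" "m \<notin> T" by (rule exists_missing[OF Ts(1)]) (use Ts ck in simp)
      have le: "card (supp (Suc k) T) \<le> c" using supp_card_le[OF Ts(1) m] Ts by simp
      have "card (supp (Suc k) T) \<noteq> c"
      proof
        assume "card (supp (Suc k) T) = c"
        then obtain a where "a \<le> c" "T = Bs (Suc k) c a" using good_Bs[OF Ts ck] by blast
        thus False using T by auto
      qed
      hence "card (supp (Suc k) T) < c" using le by simp
      thus "F0 (Suc k) T (c # Y) = 0" by (rule F0_zero)
    qed
    fix T assume "T \<in> ?G"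
    then obtain a where a: "a \<le> c" "T = Bs (Suc k) c a" by auto
    show "F0 (Suc k) T (c # Y) = F0 (Suc k) T Y"
      using F0_stay[OF Bs_sub[OF a(1) ck] Bs_card[OF a(1) ck] ck Bs_good[OF a(1) ck]] a by simp
  qed
  also have "\<dots> = (\<Sum>a\<le>c. F0 (Suc k) (Bs (Suc k) c a) Y)"
    using sum.reindex[OF Bs_inj[OF ck], of "\<lambda>T. F0 (Suc k) T Y"] by (simp add: comp_def)
  finally show ?thesis .
qed

lemma Bs_shift_iter:
  assumes "a \<le> c" "c < n"
  shows "F0 n (Bs n c a) Y = F0 (n + t) (Bs (n + t) c a) Y"
proof (induction t)
  case 0 thus ?case by simp
next
  case (Suc t)
  have c: "c < n + t" using assms by simp
  have "F0 (n + t) (Bs (n + t) c a) Y = F0 (Suc (n + t)) (sh (Suc a) ` Bs (n + t) c a) Y"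
    by (rule gap_shift[OF Bs_notin[OF assms(1) c] _ _ Bs_sub[OF assms(1) c]]) (use assms c in auto)
  also have "\<dots> = F0 (Suc (n + t)) (Bs (Suc (n + t)) c a) Y" using Bs_sh[OF assms(1) c] by simp
  finally show ?case using Suc by simp
qed

lemma part4_core:
  assumes "c < q"
  shows "F0 q {1..q} (c # c # Y) = F0 c {1..c} (c # c # Y)"
proof -
  have "F0 q {1..q} (c # c # Y) = (\<Sum>a\<le>c. F0 (Suc q) (Bs (Suc q) c a) Y)"
    using sum_full assms by simp
  also have "\<dots> = (\<Sum>a\<le>c. F0 (Suc c) (Bs (Suc c) c a) Y)"
  proof (rule sum.cong)
    fix a assume "a \<in> {..c}"
    hence "a \<le> c" by simp
    from Bs_shift_iter[OF this, of "Suc c" Y "q - c"] show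
      "F0 (Suc q) (Bs (Suc q) c a) Y = F0 (Suc c) (Bs (Suc c) c a) Y" using assms by simp
  qed simp
  also have "\<dots> = F0 c {1..c} (c # c # Y)" using sum_full by simp
  finally show ?thesis .
qed

lemma stay_rep:
  assumes "S \<subseteq> {1..k}" "card S = x" "x < k" "card (supp k S) = x"
  shows "F0 k S (replicate r x @ Y) = F0 k S Y"
proof (induction r)
  case 0 thus ?case by simp
next
  case (Suc r)
  have "F0 k S (replicate (Suc r) x @ Y) = F0 k S (x # (replicate r x @ Y))" by simp
  also have "\<dots> = F0 k S (replicate r x @ Y)" by (rule F0_stay[OF assms])
  finally show ?case using Suc by simp
qed

definition Vs :: "(nat \<Rightarrow> nat) \<Rightarrow> nat \<Rightarrow> nat list" where
  "Vs s c = concat (map (\<lambda>j. replicate (s j) j) (rev [1..<Suc c]))"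

lemma Vs_0: "Vs s 0 = []" unfolding Vs_def by simp

lemma Vs_Suc: "Vs s (Suc c) = replicate (s (Suc c)) (Suc c) @ Vs s c"
  unfolding Vs_def by simp

lemma diagseq_Vs: "diagseq q s = [1..<q + 1] @ Vs s q"
  unfolding diagseq_def Vs_def by simp

lemma Bs_subset_iff:
  assumes "c = Suc c'" "a \<le> c" "a' \<le> c'" "c < n"
  shows "Bs n c' a' \<subseteq> Bs n c a \<longleftrightarrow> (a' = a \<or> Suc a' = a)"
proof
  assume sub: "Bs n c' a' \<subseteq> Bs n c a"
  show "a' = a \<or> Suc a' = a"
  proof (rule ccontr)
    assume "\<not> (a' = a \<or> Suc a' = a)"
    hence "a < a' \<or> Suc (Suc a') \<le> a" by arith
    thus False
    proof
      assume "a < a'"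
      hence "Suc a \<in> Bs n c' a'" unfolding Bs_def by auto
      thus False using sub Bs_notin[OF assms(2,4)] by auto
    next
      assume h: "Suc (Suc a') \<le> a"
      have "n + a - c \<in> Bs n c' a'" unfolding Bs_def using h assms by auto
      moreover have "n + a - c \<notin> Bs n c a" unfolding Bs_def using h assms by auto
      ultimately show False using sub by auto
    qed
  qed
next
  assume "a' = a \<or> Suc a' = a"
  thus "Bs n c' a' \<subseteq> Bs n c a" unfolding Bs_def using assms by auto
qed

lemma binom_pair:
  assumes "a \<le> Suc c'"
  shows "(\<Sum>a'\<in>{a'. a' \<le> c' \<and> (a' = a \<or> Suc a' = a)}. c' choose a') = Suc c' choose a"
proof (cases a)
  case 0
  hence "{a'. a' \<le> c' \<and> (a' = a \<or> Suc a' = a)} = {0}" by auto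
  thus ?thesis using 0 by simp
next
  case (Suc b)
  show ?thesis
  proof (cases "b < c'")
    case True
    hence "{a'. a' \<le> c' \<and> (a' = a \<or> Suc a' = a)} = {b, Suc b}" using Suc by auto
    thus ?thesis using Suc by simp
  next
    case False
    hence "b = c'" using assms Suc by simp
    hence "{a'. a' \<le> c' \<and> (a' = a \<or> Suc a' = a)} = {c'}" using Suc by auto
    thus ?thesis using Suc \<open>b = c'\<close> by simp
  qed
qed


lemma H_lemma:
  assumes s2: "\<forall>j. 1 \<le> j \<and> j < q \<longrightarrow> 2 \<le> s j"
  shows "1 \<le> c \<Longrightarrow> c \<le> q \<Longrightarrow> a \<le> c \<Longrightarrow> c < n \<Longrightarrow>
         F0 n (Bs n c a) (Vs s (c - 1)) = c choose a"
proof (induction c arbitrary: a n)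
  case 0 thus ?case by simp
next
  case (Suc c')
  show ?case
  proof (cases "c' = 0")
    case True
    thus ?thesis using Suc.prems by (cases a) (auto simp: Vs_0 F_Nil)
  next
    case False
    define c where "c = Suc c'"
    have c'q: "c' < q" "1 \<le> c'" using Suc.prems False by auto
    have sc: "2 \<le> s c'" using s2 c'q by simp
    define W where "W = replicate (s c' - 2) c' @ Vs s (c' - 1)"
    have VW: "Vs s (Suc c' - 1) = c' # c' # W"
    proof -
      have "Vs s (Suc c' - 1) = replicate (s c') c' @ Vs s (c' - 1)"
        using Vs_Suc[of s "c' - 1"] False by simp
      moreover have "replicate (s c') c' = c' # c' # replicate (s c' - 2) c'"
      proof -
        have "s c' = Suc (Suc (s c' - 2))" using sc by simp
        hence "replicate (s c') c' = replicate (Suc (Suc (s c' - 2))) c'" by simp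
        thus ?thesis by simp
      qed
      ultimately show ?thesis unfolding W_def by simp
    qed
    have an: "a \<le> c" "c < n" using Suc.prems unfolding c_def by auto
    have cn1: "c' < Suc n" using an unfolding c_def by simp
    let ?Ch = "{T. T \<subseteq> supp n (Bs n c a) \<and> card T = c'}"
    let ?A = "{a'. a' \<le> c' \<and> (a' = a \<or> Suc a' = a)}"
    let ?G = "Bs (Suc n) c' ` ?A"
    have sp: "supp n (Bs n c a) = Bs (Suc n) c a" using Bs_supp an by simp
    have "F0 n (Bs n (Suc c') a) (Vs s (Suc c' - 1)) = F0 n (Bs n c a) (c' # c' # W)"
      using VW unfolding c_def by simp
    also have "\<dots> = (\<Sum>T\<in>?Ch. F0 (Suc n) T (c' # W))" by (rule F0_Cons)
    also have "\<dots> = (\<Sum>T\<in>?G. F0 (Suc n) T W)"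
    proof (rule sum.mono_neutral_cong_right)
      show "finite ?Ch" by (rule finite_subset[of _ "Pow (supp n (Bs n c a))"]) (auto simp: finite_supp)
      show "?G \<subseteq> ?Ch"
      proof
        fix T assume "T \<in> ?G"
        then obtain a' where a': "a' \<le> c'" "a' = a \<or> Suc a' = a" "T = Bs (Suc n) c' a'" by auto
        have "T \<subseteq> Bs (Suc n) c a" using Bs_subset_iff[OF c_def an(1) a'(1)] an a' by simp
        moreover have "card T = c'" using Bs_card a' cn1 by simp
        ultimately show "T \<in> ?Ch" using sp by simp
      qed
      show "\<forall>T\<in>?Ch - ?G. F0 (Suc n) T (c' # W) = 0"
      proof
        fix T assume T: "T \<in> ?Ch - ?G"
        hence Tsub: "T \<subseteq> Bs (Suc n) c a" and cT: "card T = c'" using sp by auto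
        have Ts: "T \<subseteq> {1..Suc n}" using Tsub Bs_sub[of a c "Suc n"] an by auto
        obtain m where m: "1 \<le> m" "m \<le> Suc n" "m \<notin> T"
          by (rule exists_missing[OF Ts]) (use cT cn1 in simp)
        have le: "card (supp (Suc n) T) \<le> c'" using supp_card_le[OF Ts m] cT by simp
        have "card (supp (Suc n) T) \<noteq> c'"
        proof
          assume "card (supp (Suc n) T) = c'"
          then obtain a' where a': "a' \<le> c'" "T = Bs (Suc n) c' a'" using good_Bs[OF Ts cT cn1] by blast
          hence "a' = a \<or> Suc a' = a" using Bs_subset_iff[OF c_def an(1) a'(1)] Tsub an by simp
          thus False using T a' by auto
        qed
        hence "card (supp (Suc n) T) < c'" using le by simp
        thus "F0 (Suc n) T (c' # W) = 0" by (rule F0_zero)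
      qed
      fix T assume "T \<in> ?G"
      then obtain a' where a': "a' \<le> c'" "T = Bs (Suc n) c' a'" by auto
      show "F0 (Suc n) T (c' # W) = F0 (Suc n) T W"
        using F0_stay[OF Bs_sub[OF a'(1) cn1] Bs_card[OF a'(1) cn1] cn1 Bs_good[OF a'(1) cn1]] a' by simp
    qed
    also have "\<dots> = (\<Sum>a'\<in>?A. F0 (Suc n) (Bs (Suc n) c' a') W)"
    proof -
      have "?A \<subseteq> {..c'}" by auto
      hence "inj_on (Bs (Suc n) c') ?A" by (rule inj_on_subset[OF Bs_inj[OF cn1]])
      thus ?thesis using sum.reindex[of "Bs (Suc n) c'" ?A "\<lambda>T. F0 (Suc n) T W"] by (simp add: comp_def)
    qed
    also have "\<dots> = (\<Sum>a'\<in>?A. c' choose a')"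
    proof (rule sum.cong)
      fix a' assume "a' \<in> ?A"
      hence a': "a' \<le> c'" by simp
      have "F0 (Suc n) (Bs (Suc n) c' a') W = F0 (Suc n) (Bs (Suc n) c' a') (Vs s (c' - 1))"
        unfolding W_def
        by (rule stay_rep[OF Bs_sub[OF a' cn1] Bs_card[OF a' cn1] cn1 Bs_good[OF a' cn1]])
      also have "\<dots> = c' choose a'" using Suc.IH[of a' "Suc n"] c'q Suc.prems a' cn1 by simp
      finally show "F0 (Suc n) (Bs (Suc n) c' a') W = c' choose a'" .
    qed simp
    also have "\<dots> = Suc c' choose a" using binom_pair an unfolding c_def by simp
    finally show ?thesis .
  qed
qed

lemma part2_core:
  assumes s2: "\<forall>j. 1 \<le> j \<and> j < q \<longrightarrow> 2 \<le> s j" and sq: "1 \<le> s q" and q: "1 \<le> q"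
  shows "F0 q {1..q} (Vs s q) = 2 ^ q"
proof -
  define V where "V = Vs s (q - 1)"
  have Vq: "Vs s q = replicate (s q) q @ V" unfolding V_def using Vs_Suc[of s "q - 1"] q by simp
  have "F0 q {1..q} (Vs s q) = F0 q {1..q} ([] @ replicate (s q) q @ V)" using Vq by simp
  also have "\<dots> = F0 q {1..q} ([] @ replicate (min (s q) 2) q @ V)" by (rule F0_rep)
  also have "\<dots> = F0 q {1..q} (q # q # V)"
  proof (cases "s q = 1")
    case True
    hence "F0 q {1..q} ([] @ replicate (min (s q) 2) q @ V) = F0 q {1..q} (q # V)" by simp
    also have "\<dots> = F0 q {1..q} (q # q # V)" using F0_dup[of "{1..q}" q q V] by simp
    finally show ?thesis .
  next
    case False
    hence "min (s q) 2 = 2" using sq by simp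
    thus ?thesis by (simp add: numeral_2_eq_2)
  qed
  also have "\<dots> = (\<Sum>a\<le>q. F0 (Suc q) (Bs (Suc q) q a) V)" using sum_full by simp
  also have "\<dots> = (\<Sum>a\<le>q. q choose a)"
  proof (rule sum.cong)
    fix a assume "a \<in> {..q}"
    thus "F0 (Suc q) (Bs (Suc q) q a) V = q choose a"
      using H_lemma[OF s2, of q a "Suc q"] q unfolding V_def by simp
  qed simp
  also have "\<dots> = 2 ^ q" by (rule choose_row_sum)
  finally show ?thesis .
qed


lemma R0: "choices (\<lambda>i. i \<le> q) k S x = {T. T \<subseteq> supp k S \<inter> {i. i \<le> q} \<and> card T = x}"
  unfolding choices_def by auto

lemma R1: "q \<le> k \<Longrightarrow> a \<le> q \<Longrightarrow> supp k {1..a} \<inter> {i. i \<le> q} = {1..a}"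
  unfolding supp_def by auto

lemma R2:
  assumes "q \<le> k" "a \<le> q"
  shows "F (\<lambda>i. i \<le> q) k {1..a} (a # ds) = F (\<lambda>i. i \<le> q) (Suc k) {1..a} ds"
proof -
  have "choices (\<lambda>i. i \<le> q) k {1..a} a = {{1..a}}"
    unfolding R0 R1[OF assms] by (rule choices_exact) auto
  thus ?thesis by (simp add: F.simps)
qed

lemma R2':
  assumes "q \<le> k" "a \<le> q"
  shows "F (\<lambda>i. i \<le> q) k {1..a} (replicate r a @ ds) = F (\<lambda>i. i \<le> q) (k + r) {1..a} ds"
  using assms
proof (induction r arbitrary: k)
  case 0 thus ?case by simp
next
  case (Suc r)
  have "F (\<lambda>i. i \<le> q) k {1..a} (replicate (Suc r) a @ ds) = F (\<lambda>i. i \<le> q) k {1..a} (a # (replicate r a @ ds))" by simp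
  also have "\<dots> = F (\<lambda>i. i \<le> q) (Suc k) {1..a} (replicate r a @ ds)" by (rule R2[OF Suc.prems])
  also have "\<dots> = F (\<lambda>i. i \<le> q) (Suc k + r) {1..a} ds" using Suc.IH Suc.prems by simp
  finally show ?case by simp
qed

lemma R3:
  assumes "1 \<le> a" "a \<le> q" "q \<le> k"
  shows "F (\<lambda>i. i \<le> q) k {1..a} ((a - 1) # (a - 1) # ds) = F (\<lambda>i. i \<le> q) (Suc (Suc k)) {1..a - 1} ds"
proof -
  let ?P = "\<lambda>i::nat. i \<le> q"
  let ?Ch = "{T. T \<subseteq> {1..a} \<and> card T = a - 1}"
  have "F ?P k {1..a} ((a - 1) # (a - 1) # ds) = (\<Sum>T\<in>?Ch. F ?P (Suc k) T ((a - 1) # ds))"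
    unfolding F.simps(2)[of ?P k] R0 R1[OF assms(3,2)] ..
  also have "\<dots> = (\<Sum>T\<in>{{1..a - 1}}. F ?P (Suc k) T ((a - 1) # ds))"
  proof (rule sum.mono_neutral_cong_right)
    show "finite ?Ch" by (rule finite_subset[of _ "Pow {1..a}"]) auto
    show "{{1..a - 1}} \<subseteq> ?Ch" by auto
    show "\<forall>T\<in>?Ch - {{1..a - 1}}. F ?P (Suc k) T ((a - 1) # ds) = 0"
    proof
      fix T assume T: "T \<in> ?Ch - {{1..a - 1}}"
      hence Ts: "T \<subseteq> {1..a}" "card T = a - 1" "T \<noteq> {1..a - 1}" by auto
      have fT: "finite T" using finite_subset[OF Ts(1)] by simp
      have aT: "a \<in> T"
      proof (rule ccontr)
        assume "a \<notin> T"
        have "T \<subseteq> {1..a - 1}"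
        proof
          fix t assume "t \<in> T"
          hence "t \<noteq> a" "1 \<le> t" "t \<le> a" using \<open>a \<notin> T\<close> Ts(1) by auto
          thus "t \<in> {1..a - 1}" by simp
        qed
        hence "T = {1..a - 1}" using card_subset_eq[of "{1..a - 1}" T] Ts(2) by simp
        thus False using Ts(3) by simp
      qed
      have "\<not> {1..a - 1} \<subseteq> T"
      proof
        assume "{1..a - 1} \<subseteq> T"
        have "{1..a} \<subseteq> T"
        proof
          fix t assume t: "t \<in> {1..a}"
          show "t \<in> T"
          proof (cases "t = a")
            case True thus ?thesis using aT by simp
          next
            case False thus ?thesis using t \<open>{1..a - 1} \<subseteq> T\<close> by auto
          qed
        qed
        hence "card {1..a} \<le> card T" using card_mono[OF fT] by blast
        thus False using Ts(2) assms(1) by simp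
      qed
      then obtain m where m: "m \<in> {1..a - 1}" "m \<notin> T" by blast
      have "card (supp (Suc k) T) < card T"
        by (rule supp_card_less[of T "Suc k" m a]) (use Ts(1) m aT assms in auto)
      hence "card (supp (Suc k) T \<inter> {i. i \<le> q}) < a - 1"
        using card_mono[OF finite_supp, of "supp (Suc k) T \<inter> {i. i \<le> q}" "Suc k" T] Ts(2) by auto
      hence "choices ?P (Suc k) T (a - 1) = {}"
        unfolding R0 by (rule choices_empty) (simp add: finite_supp)
      thus "F ?P (Suc k) T ((a - 1) # ds) = 0" by (simp add: F.simps)
    qed
  qed simp
  also have "\<dots> = F ?P (Suc k) {1..a - 1} ((a - 1) # ds)" by simp
  also have "\<dots> = F ?P (Suc (Suc k)) {1..a - 1} ds" by (rule R2) (use assms in auto)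
  finally show ?thesis .
qed

lemma R4:
  assumes s2: "\<forall>j. 1 \<le> j \<and> j < q \<longrightarrow> 2 \<le> s j"
  shows "1 \<le> c \<Longrightarrow> c \<le> q \<Longrightarrow> q \<le> k \<Longrightarrow> F (\<lambda>i. i \<le> q) k {1..c} (Vs s (c - 1)) = 1"
proof (induction c arbitrary: k)
  case 0 thus ?case by simp
next
  case (Suc c')
  show ?case
  proof (cases "c' = 0")
    case True thus ?thesis by (simp add: Vs_0 F_Nil)
  next
    case False
    have c'q: "c' < q" "1 \<le> c'" using Suc.prems False by auto
    have sc: "2 \<le> s c'" using s2 c'q by simp
    define W where "W = replicate (s c' - 2) c' @ Vs s (c' - 1)"
    have VW: "Vs s (Suc c' - 1) = c' # c' # W"
    proof -
      have "Vs s (Suc c' - 1) = replicate (s c') c' @ Vs s (c' - 1)"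
        using Vs_Suc[of s "c' - 1"] False by simp
      moreover have "s c' = Suc (Suc (s c' - 2))" using sc by simp
      hence "replicate (s c') c' = c' # c' # replicate (s c' - 2) c'"
        by (metis replicate_Suc)
      ultimately show ?thesis unfolding W_def by simp
    qed
    have "F (\<lambda>i. i \<le> q) k {1..Suc c'} (Vs s (Suc c' - 1))
        = F (\<lambda>i. i \<le> q) k {1..Suc c'} ((Suc c' - 1) # (Suc c' - 1) # W)" using VW by simp
    also have "\<dots> = F (\<lambda>i. i \<le> q) (Suc (Suc k)) {1..Suc c' - 1} W"
      by (rule R3) (use Suc.prems in auto)
    also have "\<dots> = F (\<lambda>i. i \<le> q) (Suc (Suc k) + (s c' - 2)) {1..c'} (Vs s (c' - 1))"
      unfolding W_def using R2'[of q "Suc (Suc k)" c'] Suc.prems c'q by simp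
    also have "\<dots> = 1" using Suc.IH c'q Suc.prems by simp
    finally show ?thesis .
  qed
qed

lemma part1_core:
  assumes s2: "\<forall>j. 1 \<le> j \<and> j < q \<longrightarrow> 2 \<le> s j" and q: "1 \<le> q"
  shows "F (\<lambda>i. i \<le> q) q {1..q} (Vs s q) = 1"
proof -
  have "Vs s q = replicate (s q) q @ Vs s (q - 1)" using Vs_Suc[of s "q - 1"] q by simp
  hence "F (\<lambda>i. i \<le> q) q {1..q} (Vs s q) = F (\<lambda>i. i \<le> q) (q + s q) {1..q} (Vs s (q - 1))"
    using R2'[of q q q] by simp
  also have "\<dots> = 1" using R4[OF s2, of q "q + s q"] q by simp
  finally show ?thesis .
qed


definition gg :: "nat list \<Rightarrow> nat \<Rightarrow> nat" where
  "gg u t = (if Suc t < length u then u ! t - u ! Suc t else u ! t)"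

definition pr :: "nat list \<Rightarrow> nat" where
  "pr u = (\<Prod>t<length u. gg u t + 1)"

lemma pr_cons2: "pr (x # y # r) = (x - y + 1) * pr (y # r)"
proof -
  have "pr (x # y # r) = (gg (x # y # r) 0 + 1) * (\<Prod>t<length (y # r). gg (x # y # r) (Suc t) + 1)"
    unfolding pr_def by (simp only: length_Cons prod.lessThan_Suc_shift)
  also have "gg (x # y # r) 0 = x - y" unfolding gg_def by simp
  also have "(\<Prod>t<length (y # r). gg (x # y # r) (Suc t) + 1) = pr (y # r)"
    unfolding pr_def gg_def by simp
  finally show ?thesis .
qed

lemma pr_single: "pr [x] = x + 1"
  unfolding pr_def gg_def by simp

lemma pr_rep: "pr (c # replicate n c @ Z) = pr (c # Z)"
proof (induction n)
  case 0 thus ?case by simp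
next
  case (Suc n)
  have "pr (c # replicate (Suc n) c @ Z) = pr (c # c # (replicate n c @ Z))" by simp
  also have "\<dots> = pr (c # replicate n c @ Z)" by (simp only: pr_cons2) simp
  finally show ?case using Suc by simp
qed

lemma pr_W:
  assumes s1: "\<forall>j. 1 \<le> j \<and> j < q \<longrightarrow> 1 \<le> s j"
  shows "1 \<le> c \<Longrightarrow> c \<le> q \<Longrightarrow> pr (c # Vs s c) = 2 ^ c"
proof (induction c)
  case 0 thus ?case by simp
next
  case (Suc c')
  have "pr (Suc c' # Vs s (Suc c')) = pr (Suc c' # Vs s c')"
    unfolding Vs_Suc by (rule pr_rep)
  also have "\<dots> = 2 ^ Suc c'"
  proof (cases "c' = 0")
    case True thus ?thesis by (simp add: Vs_0 pr_single)
  next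
    case False
    have sc: "1 \<le> s c'" using s1 Suc.prems False by auto
    have Vc: "Vs s c' = c' # (replicate (s c' - 1) c' @ Vs s (c' - 1))"
    proof -
      have "Vs s c' = replicate (s c') c' @ Vs s (c' - 1)" using Vs_Suc[of s "c' - 1"] False by simp
      moreover have "s c' = Suc (s c' - 1)" using sc by simp
      hence "replicate (s c') c' = c' # replicate (s c' - 1) c'" by (metis replicate_Suc)
      ultimately show ?thesis by simp
    qed
    have "pr (Suc c' # Vs s c') = (Suc c' - c' + 1) * pr (c' # (replicate (s c' - 1) c' @ Vs s (c' - 1)))"
      unfolding Vc by (rule pr_cons2)
    also have "pr (c' # (replicate (s c' - 1) c' @ Vs s (c' - 1))) = pr (c' # Vs s (c' - 1))" by (rule pr_rep)
    also have "\<dots> = pr (c' # Vs s c')"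
      using pr_rep[of c' "s c'" "Vs s (c' - 1)"] Vs_Suc[of s "c' - 1"] False by simp
    also have "\<dots> = 2 ^ c'" using Suc.IH Suc.prems False by simp
    finally show ?thesis by simp
  qed
  finally show ?case .
qed

lemma length_Vs: "length (Vs s q) = (\<Sum>i=1..q. s i)"
proof -
  have "length (Vs s q) = sum_list (map s (rev [1..<Suc q]))"
    unfolding Vs_def by (simp add: length_concat comp_def)
  also have "\<dots> = sum_list (map s [1..<Suc q])" by (simp add: rev_map[symmetric])
  also have "\<dots> = sum s (set [1..<Suc q])" by (rule interv_sum_list_conv_sum_set_nat)
  also have "set [1..<Suc q] = {1..q}" by auto
  finally show ?thesis by simp
qed

lemma prod_formula:
  assumes s1: "\<forall>j. 1 \<le> j \<and> j < q \<longrightarrow> 1 \<le> s j" and q: "1 \<le> q"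
    and dd: "d = diagseq q s"
    and Ld: "L = q + (\<Sum>i=1..q. s i)"
    and bd: "b = (\<lambda>i. if i < L then ent d i - ent d (i + 1) else ent d L)"
  shows "(\<Prod>i=q..L. b i + 1) = 2 ^ q"
proof -
  define u where "u = q # Vs s q"
  have d_u: "d = [1..<q] @ u"
  proof -
    have "[1..<q + 1] = [1..<q] @ [q]" using q by simp
    thus ?thesis unfolding dd diagseq_Vs u_def by simp
  qed
  have lu: "length u = Suc (L - q)" unfolding u_def Ld using length_Vs[of s q] by simp
  have Lq: "q \<le> L" unfolding Ld by simp
  have ld: "length d = L" using d_u lu q Lq by simp
  have entd: "ent d (q + t) = u ! t" if "t < length u" for t
  proof -
    have "1 \<le> q + t" "q + t \<le> length d" using that q ld lu Lq by auto
    hence "ent d (q + t) = d ! (q + t - 1)" unfolding ent_def by simp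
    also have "\<dots> = u ! t"
    proof -
      have "q + t - 1 = length [1..<q] + t" using q by simp
      thus ?thesis unfolding d_u by (simp only: nth_append_length_plus)
    qed
    finally show ?thesis .
  qed
  have bt: "b (q + t) = gg u t" if "t < length u" for t
  proof (cases "Suc t < length u")
    case True
    hence "q + t < L" using lu by simp
    hence "b (q + t) = ent d (q + t) - ent d (q + Suc t)" unfolding bd by simp
    moreover have "ent d (q + Suc t) = u ! Suc t" using entd True by blast
    moreover have "ent d (q + t) = u ! t" using entd that by blast
    ultimately show ?thesis using True unfolding gg_def by simp
  next
    case False
    hence "q + t = L" using lu that Lq by simp
    hence "b (q + t) = ent d (q + t)" unfolding bd by simp
    thus ?thesis using entd False that unfolding gg_def by simp
  qed
  have img: "{q..L} = (\<lambda>t. q + t) ` {..<length u}"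
  proof (intro set_eqI iffI)
    fix i assume "i \<in> {q..L}"
    hence "i = q + (i - q)" "i - q < length u" using lu by auto
    thus "i \<in> (\<lambda>t. q + t) ` {..<length u}" by blast
  next
    fix i assume "i \<in> (\<lambda>t. q + t) ` {..<length u}"
    thus "i \<in> {q..L}" using lu Lq by auto
  qed
  have "(\<Prod>i=q..L. b i + 1) = (\<Prod>t<length u. b (q + t) + 1)"
    unfolding img by (subst prod.reindex) (auto simp: inj_on_def)
  also have "\<dots> = pr u" unfolding pr_def using bt by simp
  also have "\<dots> = 2 ^ q" unfolding u_def by (rule pr_W[OF s1 q]) simp
  finally show ?thesis .
qed


lemma set_Vs: "set (Vs s q) \<subseteq> {1..q}"
  unfolding Vs_def by auto

lemma diagseq_pos: "\<forall>x\<in>set (diagseq q s). 0 < x"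
  using set_Vs[of s q] unfolding diagseq_Vs by auto

lemma diag_last: "diagseq q s = [] \<or> last (diagseq q s) \<noteq> 0"
  using pos_last[OF diagseq_pos] .

lemma dclass_Acls: "dclass d = Acls (\<lambda>_. True) d"
  unfolding dclass_def Acls_def by simp

lemma card_dclass: "card (dclass (diagseq q s)) = F0 q {1..q} (Vs s q)"
proof -
  have "card (dclass (diagseq q s)) = F0 0 {} (diagseq q s)"
    unfolding dclass_Acls by (rule count_thm[OF diag_last])
  also have "\<dots> = F0 q {1..q} (Vs s q)" unfolding diagseq_Vs by (rule stair) simp
  finally show ?thesis .
qed

lemma ent_diagseq_q: "1 \<le> q \<Longrightarrow> ent (diagseq q s) q = q"
proof -
  assume q: "1 \<le> q"
  have "ent (diagseq q s) q = ([1..<q + 1] @ Vs s q) ! (q - 1)"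
    unfolding ent_def diagseq_Vs using q by simp
  also have "\<dots> = [1..<q + 1] ! (q - 1)" using q by (simp add: nth_append del: upt_Suc)
  also have "\<dots> = q" using q by (simp del: upt_Suc)
  finally show ?thesis .
qed

lemma part1:
  assumes q: "1 \<le> q" and s2: "\<forall>j. 1 \<le> j \<and> j < q \<longrightarrow> 2 \<le> s j"
  shows "card (dclass_k (diagseq q s) q) = 1"
proof -
  define d where "d = diagseq q s"
  have "dclass_k d q = Acls (\<lambda>i. i \<le> q) d"
  proof (intro set_eqI)
    fix \<alpha>
    show "\<alpha> \<in> dclass_k d q \<longleftrightarrow> \<alpha> \<in> Acls (\<lambda>i. i \<le> q) d"
    proof (cases "is_partition \<alpha> (sum_list \<alpha>) \<and> delta \<alpha> = d")
      case False thus ?thesis unfolding dclass_k_def dclass_def Acls_def by auto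
    next
      case True
      hence part: "is_partition \<alpha> (sum_list \<alpha>)" and dl: "delta \<alpha> = d" by auto
      have pos: "\<forall>x\<in>set \<alpha>. 0 < x" using part unfolding is_partition_def by simp
      have de: "diag_entry \<alpha> q = q"
        using delta_iff[OF part diag_last[of q s, folded d_def]] dl ent_diagseq_q[OF q, of s] q d_def by simp
      have "Sa \<alpha> q = {1..q}"
      proof (rule card_subset_eq)
        show "finite {1..q}" by simp
        show "Sa \<alpha> q \<subseteq> {1..q}" unfolding Sa_def by auto
        show "card (Sa \<alpha> q) = card {1..q}" using de diag_entry_Sa by simp
      qed
      hence "q \<in> Sa \<alpha> q" using q by simp
      hence "q \<le> part \<alpha> q + q - 1" unfolding Sa_def by simp
      hence "1 \<le> part \<alpha> q" using q by arith
      hence lq: "q \<le> length \<alpha>" unfolding part_def by (cases "1 \<le> q \<and> q \<le> length \<alpha>") auto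
      have ppos: "0 < part \<alpha> i \<longleftrightarrow> 1 \<le> i \<and> i \<le> length \<alpha>" for i
      proof
        assume "0 < part \<alpha> i" thus "1 \<le> i \<and> i \<le> length \<alpha>" unfolding part_def by (auto split: if_splits)
      next
        assume h: "1 \<le> i \<and> i \<le> length \<alpha>"
        hence "i - 1 < length \<alpha>" by arith
        hence "\<alpha> ! (i - 1) \<in> set \<alpha>" by (rule nth_mem)
        thus "0 < part \<alpha> i" using pos h unfolding part_def by auto
      qed
      have "length \<alpha> = q \<longleftrightarrow> (\<forall>i. 0 < part \<alpha> i \<longrightarrow> i \<le> q)"
      proof
        assume "length \<alpha> = q" thus "\<forall>i. 0 < part \<alpha> i \<longrightarrow> i \<le> q" using ppos by auto
      next
        assume h: "\<forall>i. 0 < part \<alpha> i \<longrightarrow> i \<le> q"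
        have "length \<alpha> \<le> q" using h[rule_format, of "length \<alpha>"] ppos[of "length \<alpha>"] lq q by simp
        thus "length \<alpha> = q" using lq by simp
      qed
      thus ?thesis using True unfolding dclass_k_def dclass_def Acls_def by auto
    qed
  qed
  hence "card (dclass_k d q) = F (\<lambda>i. i \<le> q) 0 {} d"
    using count_thm[OF diag_last[of q s, folded d_def]] by simp
  also have "\<dots> = F (\<lambda>i. i \<le> q) q {1..q} (Vs s q)" unfolding d_def diagseq_Vs by (rule stair) simp
  also have "\<dots> = 1" by (rule part1_core[OF s2 q])
  finally show ?thesis unfolding d_def .
qed

lemma part3:
  assumes m: "1 \<le> m"
  shows "\<exists>n'::nat. 0 < n' \<and> (\<exists>\<alpha>. \<alpha> \<in> partitions n' \<and> card (dclass (delta \<alpha>)) = m)"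
proof -
  define d where "d = [1..<m] @ [1]"
  have dl: "d = [] \<or> last d \<noteq> 0" unfolding d_def by simp
  have "card (dclass d) = F0 0 {} d" unfolding dclass_Acls by (rule count_thm[OF dl])
  also have "\<dots> = F0 (m - 1) {1..m - 1} [1]"
  proof -
    have "[1..<m - 1 + 1] = [1..<m]" using m by simp
    hence "F0 0 {} d = F0 0 {} ([1..<m - 1 + 1] @ [1])" unfolding d_def by simp
    also have "\<dots> = F0 (m - 1) {1..m - 1} [1]" by (rule stair) simp
    finally show ?thesis .
  qed
  also have "\<dots> = card {T. T \<subseteq> {1..Suc (m - 1)} \<and> card T = 1}"
    unfolding F0_Cons supp_full F_Nil by simp
  also have "\<dots> = m" using n_subsets[of "{1..Suc (m - 1)}" 1] m by simp
  finally have cm: "card (dclass d) = m" .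
  hence "dclass d \<noteq> {}" using m by auto
  then obtain \<alpha> where a: "\<alpha> \<in> dclass d" by blast
  hence part: "is_partition \<alpha> (sum_list \<alpha>)" and da: "delta \<alpha> = d" unfolding dclass_def by auto
  have "\<alpha> \<noteq> []"
  proof
    assume "\<alpha> = []"
    hence "delta \<alpha> = []" unfolding delta_def by simp
    thus False using da unfolding d_def by simp
  qed
  hence "\<alpha> ! 0 + 0 \<le> sum_list \<alpha>" using partition_bound[of \<alpha> 0] part unfolding is_partition_def by simp
  moreover have "0 < \<alpha> ! 0" using part \<open>\<alpha> \<noteq> []\<close> unfolding is_partition_def by simp
  ultimately have "0 < sum_list \<alpha>" by simp
  moreover have "\<alpha> \<in> partitions (sum_list \<alpha>)" using part unfolding partitions_def by simp
  moreover have "card (dclass (delta \<alpha>)) = m" using da cm by simp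
  ultimately show ?thesis by blast
qed

lemma Vs_zero:
  assumes "\<forall>j. k < j \<and> j \<le> k + t \<longrightarrow> s j = 0"
  shows "Vs s (k + t) = Vs s k"
  using assms
proof (induction t)
  case 0 thus ?case by simp
next
  case (Suc t)
  have "s (Suc (k + t)) = 0" using Suc.prems by simp
  hence "Vs s (k + Suc t) = Vs s (k + t)" using Vs_Suc[of s "k + t"] by simp
  thus ?case using Suc by simp
qed

lemma part4:
  assumes k: "1 \<le> k" "k < q" "2 \<le> s k" and z: "\<forall>j. k < j \<and> j \<le> q \<longrightarrow> s j = 0"
  shows "card (dclass (diagseq q s)) = card (dclass (diagseq k s))"
proof -
  have Vq: "Vs s q = Vs s k" using Vs_zero[of k "q - k" s] z k by simp
  define Y where "Y = replicate (s k - 2) k @ Vs s (k - 1)"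
  have VY: "Vs s k = k # k # Y"
  proof -
    have "Vs s k = replicate (s k) k @ Vs s (k - 1)" using Vs_Suc[of s "k - 1"] k by simp
    moreover have "s k = Suc (Suc (s k - 2))" using k by simp
    hence "replicate (s k) k = k # k # replicate (s k - 2) k" by (metis replicate_Suc)
    ultimately show ?thesis unfolding Y_def by simp
  qed
  have "card (dclass (diagseq q s)) = F0 q {1..q} (k # k # Y)" using card_dclass Vq VY by simp
  also have "\<dots> = F0 k {1..k} (k # k # Y)" by (rule part4_core[OF k(2)])
  also have "\<dots> = card (dclass (diagseq k s))" using card_dclass VY by simp
  finally show ?thesis .
qed

lemma part5:
  "card (dclass (diagseq q s)) = card (dclass (diagseq q (\<lambda>i. min (s i) 2)))"
proof -
  have "card (dclass (diagseq q s)) = F0 0 {} (diagseq q s)"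
    unfolding dclass_Acls by (rule count_thm[OF diag_last])
  also have "\<dots> = F0 0 {} ([1..<q + 1] @ concat (map (\<lambda>j. replicate (s j) j) (rev [1..<Suc q])))"
    unfolding diagseq_Vs Vs_def ..
  also have "\<dots> = F0 0 {} ([1..<q + 1] @ concat (map (\<lambda>j. replicate (min (s j) 2) j) (rev [1..<Suc q])))"
    by (rule F0_concat)
  also have "\<dots> = F0 0 {} (diagseq q (\<lambda>i. min (s i) 2))"
    unfolding diagseq_Vs Vs_def ..
  also have "\<dots> = card (dclass (diagseq q (\<lambda>i. min (s i) 2)))"
    unfolding dclass_Acls by (rule count_thm[OF diag_last, symmetric])
  finally show ?thesis .
qed

theorem corollary4p7:
  fixes n q :: nat and s :: "nat \<Rightarrow> nat" and d :: "nat list"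
  assumes "0 < n" and "d \<in> Delta n" and "1 \<le> q" and "d = diagseq q s"
  defines "L \<equiv> q + (\<Sum>i=1..q. s i)"
  defines "b \<equiv> (\<lambda>i. if i < L then ent d i - ent d (i + 1) else ent d L)"
  shows
    "((\<forall>i. 1 \<le> i \<and> i < q \<longrightarrow> 2 \<le> s i) \<longrightarrow> card (dclass_k d q) = 1)
   \<and> ((\<forall>i. 1 \<le> i \<and> i < q \<longrightarrow> 2 \<le> s i) \<and> 1 \<le> s q \<longrightarrow>
        card (dclass d) = (\<Prod>i=q..L. b i + 1))
   \<and> (\<forall>m::nat. 1 \<le> m \<longrightarrow> (\<exists>n'::nat. 0 < n' \<and> (\<exists>\<alpha>. \<alpha> \<in> partitions n' \<and>
        card (dclass (delta \<alpha>)) = m)))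
   \<and> (\<forall>k. 1 \<le> k \<and> k < q \<and> 2 \<le> s k \<and> (\<forall>j. k < j \<and> j \<le> q \<longrightarrow> s j = 0) \<longrightarrow>
        card (dclass d) = card (dclass (diagseq k s)))
   \<and> (card (dclass d) = card (dclass (diagseq q (\<lambda>i. min (s i) 2))))"
proof -
  have q: "1 \<le> q" by (rule assms(3))
  have dd: "d = diagseq q s" by (rule assms(4))
  have p1: "(\<forall>i. 1 \<le> i \<and> i < q \<longrightarrow> 2 \<le> s i) \<longrightarrow> card (dclass_k d q) = 1"
    using part1[OF q] dd by simp
  have p2: "(\<forall>i. 1 \<le> i \<and> i < q \<longrightarrow> 2 \<le> s i) \<and> 1 \<le> s q \<longrightarrow>
        card (dclass d) = (\<Prod>i=q..L. b i + 1)"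
  proof
    assume h: "(\<forall>i. 1 \<le> i \<and> i < q \<longrightarrow> 2 \<le> s i) \<and> 1 \<le> s q"
    hence s2: "\<forall>i. 1 \<le> i \<and> i < q \<longrightarrow> 2 \<le> s i" and sq: "1 \<le> s q" by auto
    have s1: "\<forall>i. 1 \<le> i \<and> i < q \<longrightarrow> 1 \<le> s i" using s2 by force
    have "card (dclass d) = 2 ^ q" using card_dclass part2_core[OF s2 sq q] dd by simp
    also have "\<dots> = (\<Prod>i=q..L. b i + 1)"
    proof -
      have Le: "L = q + (\<Sum>i=1..q. s i)" unfolding L_def ..
      have be: "b = (\<lambda>i. if i < L then ent d i - ent d (i + 1) else ent d L)" unfolding b_def ..
      show ?thesis by (rule prod_formula[OF s1 q dd Le be, symmetric])
    qed
    finally show "card (dclass d) = (\<Prod>i=q..L. b i + 1)" .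
  qed
  have p3: "\<forall>m::nat. 1 \<le> m \<longrightarrow> (\<exists>n'::nat. 0 < n' \<and> (\<exists>\<alpha>. \<alpha> \<in> partitions n' \<and>
        card (dclass (delta \<alpha>)) = m))"
    using part3 by blast
  have p4: "\<forall>k. 1 \<le> k \<and> k < q \<and> 2 \<le> s k \<and> (\<forall>j. k < j \<and> j \<le> q \<longrightarrow> s j = 0) \<longrightarrow>
        card (dclass d) = card (dclass (diagseq k s))"
    using part4 dd by blast
  have p5: "card (dclass d) = card (dclass (diagseq q (\<lambda>i. min (s i) 2)))"
    using part5 dd by simp
  show ?thesis using p1 p2 p3 p4 p5 by blast
qed

end
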